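(* Let $x:M^n\to\mathbb{R}^{n+1}$ be a locally strongly convex centroaffine hypersurface, and suppose there is a non-constant smooth function $\mu$ on $M^n$ such that $(\hat\nabla_ZK)(X,Y)=\mu\big(h(X,Y)Z+h(X,Z)Y+h(Y,Z)X\big)$ for all tangent vectors $X,Y,Z$ at every point. Let $p\in M^n$ be a point with $d\mu_p\ne0$, and let $\{e_1,\dots,e_n\}$ be an $h$-orthonormal basis of $T_pM^n$ such that $e_1$ maximizes $f(u)=h(K_uu,u)$ over the $h$-unit vectors $u\in T_pM^n$, $K_{e_1}e_i=\lambda_ie_i$ for all $i$, and $\lambda_1\ge2\lambda_i$ for $i\ge2$ (with $f(e_i)=0$ if $\lambda_1=2\lambda_i$), the $e_2,\dots,e_n$ being ordered so that $\lambda_2\le\dots\le\lambda_n$. Then there is no integer $m$ with $2\le m\le n-1$ such that $\lambda_2=\dots=\lambda_m<\lambda_{m+1}=\dots=\lambda_n$.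
   Context: A centroaffine hypersurface is an immersion $x:M^n\to\mathbb{R}^{n+1}$ whose position vector is everywhere transversal to the tangent space; with $D$ the flat connection of $\mathbb{R}^{n+1}$, $D_Xx_*(Y)=x_*(\nabla_XY)+h(X,Y)(-\varepsilon x)$, $\varepsilon=\pm1$, defines the induced connection $\nabla$ and centroaffine metric $h$. Locally strongly convex means $h$ definite, and $\varepsilon$ is chosen so that $h$ is positive definite. $\hat\nabla$ is the Levi-Civita connection of $h$ and $K_XY=\nabla_XY-\hat\nabla_XY$ the difference tensor. *)

theory Defs
  imports "HOL-Analysis.Analysis"
begin

text \<open>The manifold M is
represented by an open parameter domain U in real^'n (a chart around p); all
geometric objects are given by their components in the coordinate frame
d_1, ..., d_n.\<close>

definition pd :: "'n::finite \<Rightarrow> (real^'n \<Rightarrow> 'a::real_normed_vector) \<Rightarrow> real^'n \<Rightarrow> 'a" where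
  "pd i f p = frechet_derivative f (at p) (axis i 1)"

fun iter_pd :: "'n::finite list \<Rightarrow> (real^'n \<Rightarrow> 'a::real_normed_vector) \<Rightarrow> real^'n \<Rightarrow> 'a" where
  "iter_pd [] f = f"
| "iter_pd (i # is) f = pd i (iter_pd is f)"

definition smooth_on :: "(real^'n::finite) set \<Rightarrow> (real^'n \<Rightarrow> 'a::real_normed_vector) \<Rightarrow> bool" where
  "smooth_on U f \<longleftrightarrow> (\<forall>is. iter_pd is f differentiable_on U)"

text \<open>Centroaffine hypersurface x : U \<rightarrow> R^(n+1) with induced connection
(Christoffel symbols G k i j, i.e. nabla_{d_i} d_j = sum_k G k i j d_k) and
centroaffine metric h, defined by the Gauss formula
D_{d_i} x_*(d_j) = x_*(nabla_{d_i} d_j) + h(d_i,d_j) (-eps x).\<close>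
definition centroaffine_hypersurface ::
  "(real^'n::finite) set \<Rightarrow> (real^'n \<Rightarrow> real^'m::finite) \<Rightarrow> real
   \<Rightarrow> ('n \<Rightarrow> 'n \<Rightarrow> 'n \<Rightarrow> real^'n \<Rightarrow> real) \<Rightarrow> ('n \<Rightarrow> 'n \<Rightarrow> real^'n \<Rightarrow> real) \<Rightarrow> bool" where
  "centroaffine_hypersurface U x eps G h \<longleftrightarrow>
     open U \<and> smooth_on U x \<and> CARD('m) = CARD('n) + 1 \<and> (eps = 1 \<or> eps = -1) \<and>
     (\<forall>q\<in>U. \<forall>a c. a *\<^sub>R x q + (\<Sum>k\<in>UNIV. c k *\<^sub>R pd k x q) = 0 \<longrightarrow> a = 0 \<and> (\<forall>k. c k = 0)) \<and>
     (\<forall>q\<in>U. \<forall>i j. pd i (pd j x) q =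
        (\<Sum>k\<in>UNIV. G k i j q *\<^sub>R pd k x q) + h i j q *\<^sub>R (- eps *\<^sub>R x q))"

definition positive_definite_on :: "(real^'n::finite) set \<Rightarrow> ('n \<Rightarrow> 'n \<Rightarrow> real^'n \<Rightarrow> real) \<Rightarrow> bool" where
  "positive_definite_on U h \<longleftrightarrow>
     (\<forall>q\<in>U. \<forall>v::real^'n. v \<noteq> 0 \<longrightarrow> (\<Sum>i\<in>UNIV. \<Sum>j\<in>UNIV. h i j q * v$i * v$j) > 0)"

definition levi_civita :: "(real^'n::finite) set \<Rightarrow> ('n \<Rightarrow> 'n \<Rightarrow> real^'n \<Rightarrow> real)
   \<Rightarrow> ('n \<Rightarrow> 'n \<Rightarrow> 'n \<Rightarrow> real^'n \<Rightarrow> real) \<Rightarrow> bool" where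
  "levi_civita U h hG \<longleftrightarrow>
     (\<forall>q\<in>U. \<forall>i j k. hG k i j q = hG k j i q \<and>
        pd k (h i j) q = (\<Sum>l\<in>UNIV. hG l k i q * h l j q + hG l k j q * h i l q))"

text \<open>Difference tensor K_{d_i} d_j = sum_k Kt k i j d_k.\<close>
definition diff_tensor :: "('n \<Rightarrow> 'n \<Rightarrow> 'n \<Rightarrow> real^'n::finite \<Rightarrow> real)
   \<Rightarrow> ('n \<Rightarrow> 'n \<Rightarrow> 'n \<Rightarrow> real^'n \<Rightarrow> real) \<Rightarrow> 'n \<Rightarrow> 'n \<Rightarrow> 'n \<Rightarrow> real^'n \<Rightarrow> real" where
  "diff_tensor G hG k i j q = G k i j q - hG k i j q"

text \<open>Components of (hat nabla_{d_l} K)(d_i, d_j), k-th coordinate.\<close>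
definition cov_deriv_K :: "('n \<Rightarrow> 'n \<Rightarrow> 'n \<Rightarrow> real^'n::finite \<Rightarrow> real)
   \<Rightarrow> ('n \<Rightarrow> 'n \<Rightarrow> 'n \<Rightarrow> real^'n \<Rightarrow> real) \<Rightarrow> 'n \<Rightarrow> 'n \<Rightarrow> 'n \<Rightarrow> 'n \<Rightarrow> real^'n \<Rightarrow> real" where
  "cov_deriv_K hG Kt l k i j q =
     pd l (Kt k i j) q
     + (\<Sum>m\<in>UNIV. hG k l m q * Kt m i j q)
     - (\<Sum>m\<in>UNIV. hG m l i q * Kt k m j q)
     - (\<Sum>m\<in>UNIV. hG m l j q * Kt k i m q)"

text \<open>Pointwise objects at a point p on T_pM = real^'n (coordinate vectors).\<close>
definition metric_at :: "('n::finite \<Rightarrow> 'n \<Rightarrow> real^'n \<Rightarrow> real) \<Rightarrow> real^'n \<Rightarrow> real^'n \<Rightarrow> real^'n \<Rightarrow> real" where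
  "metric_at h p u v = (\<Sum>i\<in>UNIV. \<Sum>j\<in>UNIV. h i j p * u$i * v$j)"

definition K_at :: "('n::finite \<Rightarrow> 'n \<Rightarrow> 'n \<Rightarrow> real^'n \<Rightarrow> real) \<Rightarrow> real^'n \<Rightarrow> real^'n \<Rightarrow> real^'n \<Rightarrow> real^'n" where
  "K_at Kt p u v = (\<chi> k. \<Sum>i\<in>UNIV. \<Sum>j\<in>UNIV. Kt k i j p * u$i * v$j)"

end

theory Submission
  imports Defs
begin

lemma pd_has_derivative:
  assumes "(f has_derivative f') (at q)"
  shows "pd i f q = f' (axis i 1)"
  using frechet_derivative_at[OF assms] by (simp add: pd_def)

lemma iter_pd_append: "iter_pd is (pd i f) = iter_pd (is @ [i]) f"
  by (induction "is") auto

lemma smooth_on_pd: "smooth_on U f \<Longrightarrow> smooth_on U (pd i f)"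
  unfolding smooth_on_def by (simp add: iter_pd_append)

lemma smooth_on_diff_on: "smooth_on U f \<Longrightarrow> f differentiable_on U"
  unfolding smooth_on_def by (metis iter_pd.simps(1))

lemma smooth_diff_at: "smooth_on U f \<Longrightarrow> open U \<Longrightarrow> q \<in> U \<Longrightarrow> f differentiable (at q)"
  using smooth_on_diff_on differentiable_on_eq_differentiable_at by blast

lemma pd_cong_open:
  assumes "open U" "q \<in> U" "\<And>y. y \<in> U \<Longrightarrow> f y = g y"
  shows "pd i f q = pd i g q"
proof -
  have "\<And>D. (f has_derivative D) (at q) \<longleftrightarrow> (g has_derivative D) (at q)"
    using has_derivative_transform_within_open assms by (metis (no_types, lifting))
  then have "frechet_derivative f (at q) = frechet_derivative g (at q)"
    unfolding frechet_derivative_def by simp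
  then show ?thesis by (simp add: pd_def)
qed

lemma line_deriv:
  fixes F :: "real^'n::finite \<Rightarrow> 'v::real_normed_vector"
  assumes "F differentiable (at (c + s *\<^sub>R v))"
  shows "((\<lambda>s. F (c + s *\<^sub>R v)) has_vector_derivative frechet_derivative F (at (c + s *\<^sub>R v)) v) (at s within S)"
proof -
  have d1: "((\<lambda>s. c + s *\<^sub>R v) has_derivative (\<lambda>h. h *\<^sub>R v)) (at s within S)"
    by (auto intro!: derivative_eq_intros)
  have d2: "(F has_derivative frechet_derivative F (at (c + s *\<^sub>R v))) (at (c + s *\<^sub>R v) within ((\<lambda>s. c + s *\<^sub>R v) ` S))"
    using assms frechet_derivative_works has_derivative_at_withinI by blast
  have lin: "linear (frechet_derivative F (at (c + s *\<^sub>R v)))"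
    using assms linear_frechet_derivative by blast
  have "((\<lambda>s. F (c + s *\<^sub>R v)) has_derivative (\<lambda>h. frechet_derivative F (at (c + s *\<^sub>R v)) (h *\<^sub>R v))) (at s within S)"
    using has_derivative_in_compose[OF d1 d2] by simp
  moreover have "(\<lambda>h. frechet_derivative F (at (c + s *\<^sub>R v)) (h *\<^sub>R v)) = (\<lambda>h. h *\<^sub>R frechet_derivative F (at (c + s *\<^sub>R v)) v)"
    using lin by (simp add: linear_scale)
  ultimately show ?thesis by (simp add: has_vector_derivative_def)
qed

lemma schwarz_aux:
  fixes f :: "real^'n::finite \<Rightarrow> 'v::real_normed_vector"
  assumes U: "open U" "p \<in> U" and df: "f differentiable_on U" and dg: "pd b f differentiable_on U"
    and cont: "continuous (at p) (pd a (pd b f))" and e: "e > 0"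
  shows "\<exists>d>0. \<forall>t. 0 < t \<and> t < d \<longrightarrow>
     norm (f (p + t *\<^sub>R axis a 1 + t *\<^sub>R axis b 1) - f (p + t *\<^sub>R axis a 1) - f (p + t *\<^sub>R axis b 1) + f p
        - (t * t) *\<^sub>R pd a (pd b f) p) \<le> 9 * e * (t * t)"
proof -
  define A where "A = (axis a 1 :: real^'n)"
  define B where "B = (axis b 1 :: real^'n)"
  define L where "L = pd a (pd b f) p"
  define D where "D = pd a (pd b f)"
  have nA: "norm A = 1" and nB: "norm B = 1" by (simp_all add: A_def B_def)
  obtain r where r: "r > 0" "ball p r \<subseteq> U" using U open_contains_ball by blast
  obtain d0 where d0: "d0 > 0" "\<And>y. dist y p < d0 \<Longrightarrow> dist (D y) L < e"
    using cont e unfolding continuous_at_eps_delta D_def L_def by blast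
  define d where "d = min r d0 / 2"
  have dpos: "d > 0" using r d0 by (simp add: d_def)
  have inU: "p + x *\<^sub>R A + y *\<^sub>R B \<in> U" and closeD: "norm (D (p + x *\<^sub>R A + y *\<^sub>R B) - L) < e"
    if "0 \<le> x" "x \<le> t" "0 \<le> y" "y \<le> t" "t < d" for x y t
  proof -
    have "norm (x *\<^sub>R A + y *\<^sub>R B) \<le> norm (x *\<^sub>R A) + norm (y *\<^sub>R B)" by (rule norm_triangle_ineq)
    also have "\<dots> = x + y" using that nA nB by simp
    finally have n: "norm (x *\<^sub>R A + y *\<^sub>R B) < min r d0" using that d_def by linarith
    have "dist (p + x *\<^sub>R A + y *\<^sub>R B) p = norm (x *\<^sub>R A + y *\<^sub>R B)"
      by (simp add: dist_norm algebra_simps)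
    then have "dist (p + x *\<^sub>R A + y *\<^sub>R B) p < r" "dist (p + x *\<^sub>R A + y *\<^sub>R B) p < d0" using n by auto
    then show "p + x *\<^sub>R A + y *\<^sub>R B \<in> U" "norm (D (p + x *\<^sub>R A + y *\<^sub>R B) - L) < e"
      using r d0(2)[of "p + x *\<^sub>R A + y *\<^sub>R B"] by (auto simp: dist_commute dist_norm mem_ball norm_minus_commute)
  qed
  have diffat: "g differentiable (at y)" if "g differentiable_on U" "y \<in> U" for g :: "real^'n \<Rightarrow> 'v" and y
    using that U differentiable_on_eq_differentiable_at by blast
  have inner: "norm (pd b f (p + t *\<^sub>R A + s *\<^sub>R B) - pd b f (p + s *\<^sub>R B) - t *\<^sub>R L) \<le> 3 * e * t"
    if ts: "0 < t" "t < d" "0 \<le> s" "s \<le> t" for t s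
  proof -
    define k where "k = (\<lambda>x. pd b f ((p + s *\<^sub>R B) + x *\<^sub>R A))"
    have kd: "(k has_vector_derivative D (p + x *\<^sub>R A + s *\<^sub>R B)) (at x within {0..t})" if "x \<in> {0..t}" for x
    proof -
      have "p + x *\<^sub>R A + s *\<^sub>R B \<in> U" using inU[of x t s] that ts by auto
      then have "pd b f differentiable (at ((p + s *\<^sub>R B) + x *\<^sub>R A))"
        using diffat[OF dg] by (simp add: algebra_simps)
      from line_deriv[OF this, of "{0..t}"] show ?thesis
        unfolding k_def D_def pd_def A_def by (simp add: algebra_simps)
    qed
    have bnd: "norm (D (p + x *\<^sub>R A + s *\<^sub>R B) - D (p + 0 *\<^sub>R A + s *\<^sub>R B)) \<le> 2 * e" if "x \<in> {0..t}" for x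
    proof -
      have "norm (D (p + x *\<^sub>R A + s *\<^sub>R B) - L) < e" using closeD[of x t s] that ts by auto
      moreover have "norm (D (p + 0 *\<^sub>R A + s *\<^sub>R B) - L) < e" using closeD[of 0 t s] that ts by auto
      ultimately show ?thesis using norm_triangle_ineq4[of "D (p + x *\<^sub>R A + s *\<^sub>R B) - L" "D (p + 0 *\<^sub>R A + s *\<^sub>R B) - L"]
        by (simp add: algebra_simps)
    qed
    have "norm (k t - k 0 - (t - 0) *\<^sub>R D (p + 0 *\<^sub>R A + s *\<^sub>R B)) \<le> norm (t - 0) * (2 * e)"
      apply (rule vector_differentiable_bound_linearization[where S="{0..t}" and f=k and f'="\<lambda>x. D (p + x *\<^sub>R A + s *\<^sub>R B)" and a=0 and b=t and ?x0.0=0 and B="2*e"])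
      using kd bnd ts by (auto simp: closed_segment_eq_real_ivl)
    then have i1: "norm (k t - k 0 - t *\<^sub>R D (p + s *\<^sub>R B)) \<le> t * (2 * e)" using ts by simp
    have i2: "norm (t *\<^sub>R D (p + s *\<^sub>R B) - t *\<^sub>R L) \<le> t * e"
    proof -
      have "norm (D (p + 0 *\<^sub>R A + s *\<^sub>R B) - L) < e" using closeD[of 0 t s] ts by auto
      then have "norm (D (p + s *\<^sub>R B) - L) \<le> e" by simp
      then show ?thesis using ts by (simp add: scaleR_diff_right[symmetric] mult_left_mono)
    qed
    have "norm (k t - k 0 - t *\<^sub>R L) \<le> norm (k t - k 0 - t *\<^sub>R D (p + s *\<^sub>R B)) + norm (t *\<^sub>R D (p + s *\<^sub>R B) - t *\<^sub>R L)"
      using norm_triangle_ineq[of "k t - k 0 - t *\<^sub>R D (p + s *\<^sub>R B)" "t *\<^sub>R D (p + s *\<^sub>R B) - t *\<^sub>R L"]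
      by (simp add: algebra_simps)
    also have "\<dots> \<le> 3 * e * t" using i1 i2 by (simp add: algebra_simps)
    finally show ?thesis unfolding k_def by (simp add: algebra_simps)
  qed
  show ?thesis
  proof (intro exI[of _ d] conjI allI impI)
    show "d > 0" by (rule dpos)
    fix t assume ts: "0 < t \<and> t < d"
    define g where "g = (\<lambda>s. f ((p + t *\<^sub>R A) + s *\<^sub>R B) - f (p + s *\<^sub>R B))"
    define g' where "g' = (\<lambda>s. pd b f (p + t *\<^sub>R A + s *\<^sub>R B) - pd b f (p + s *\<^sub>R B))"
    have gd: "(g has_vector_derivative g' s) (at s within {0..t})" if "s \<in> {0..t}" for s
    proof -
      have u1: "p + t *\<^sub>R A + s *\<^sub>R B \<in> U" using inU[of t t s] that ts by auto
      have u2: "p + s *\<^sub>R B \<in> U" using inU[of 0 t s] that ts by auto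
      have "f differentiable (at ((p + t *\<^sub>R A) + s *\<^sub>R B))" using diffat[OF df u1] by simp
      note l1 = line_deriv[OF this, of "{0..t}"]
      have "f differentiable (at (p + s *\<^sub>R B))" using diffat[OF df u2] by simp
      note l2 = line_deriv[OF this, of "{0..t}"]
      show ?thesis using has_vector_derivative_diff[OF l1 l2]
        unfolding g_def g'_def pd_def B_def by simp
    qed
    have gb: "norm (g' s - g' 0) \<le> 6 * e * t" if "s \<in> {0..t}" for s
    proof -
      have a1: "norm (g' s - t *\<^sub>R L) \<le> 3 * e * t" using inner[of t s] ts that unfolding g'_def by auto
      have a2: "norm (g' 0 - t *\<^sub>R L) \<le> 3 * e * t" using inner[of t 0] ts that unfolding g'_def by auto
      show ?thesis using a1 a2 norm_triangle_ineq4[of "g' s - t *\<^sub>R L" "g' 0 - t *\<^sub>R L"]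
        by (simp add: algebra_simps)
    qed
    have "norm (g t - g 0 - (t - 0) *\<^sub>R g' 0) \<le> norm (t - 0) * (6 * e * t)"
      apply (rule vector_differentiable_bound_linearization[where S="{0..t}" and f=g and f'=g' and a=0 and b=t and ?x0.0=0 and B="6*e*t"])
      using gd gb ts by (auto simp: closed_segment_eq_real_ivl)
    then have o1: "norm (g t - g 0 - t *\<^sub>R g' 0) \<le> 6 * e * (t * t)" using ts by (simp add: algebra_simps)
    have o2: "norm (t *\<^sub>R g' 0 - (t * t) *\<^sub>R L) \<le> 3 * e * (t * t)"
    proof -
      have "norm (g' 0 - t *\<^sub>R L) \<le> 3 * e * t" using inner[of t 0] ts unfolding g'_def by auto
      then have m: "t * norm (g' 0 - t *\<^sub>R L) \<le> t * (3 * e * t)" using ts by (simp add: mult_left_mono)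
      have q: "t *\<^sub>R g' 0 - (t * t) *\<^sub>R L = t *\<^sub>R (g' 0 - t *\<^sub>R L)" by (simp add: algebra_simps)
      have "norm (t *\<^sub>R g' 0 - (t * t) *\<^sub>R L) = t * norm (g' 0 - t *\<^sub>R L)" unfolding q using ts by simp
      then show ?thesis using m by (simp add: algebra_simps)
    qed
    have "norm (g t - g 0 - (t * t) *\<^sub>R L) \<le> 9 * e * (t * t)"
      using o1 o2 norm_triangle_ineq[of "g t - g 0 - t *\<^sub>R g' 0" "t *\<^sub>R g' 0 - (t * t) *\<^sub>R L"]
      by (simp add: algebra_simps)
    moreover have "g t - g 0 = f (p + t *\<^sub>R axis a 1 + t *\<^sub>R axis b 1) - f (p + t *\<^sub>R axis a 1) - f (p + t *\<^sub>R axis b 1) + f p"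
      unfolding g_def A_def B_def by (simp add: algebra_simps)
    ultimately show "norm (f (p + t *\<^sub>R axis a 1 + t *\<^sub>R axis b 1) - f (p + t *\<^sub>R axis a 1) - f (p + t *\<^sub>R axis b 1) + f p
        - (t * t) *\<^sub>R pd a (pd b f) p) \<le> 9 * e * (t * t)" unfolding L_def by simp
  qed
qed

lemma schwarz:
  fixes f :: "real^'n::finite \<Rightarrow> 'v::real_normed_vector"
  assumes U: "open U" "p \<in> U" and sm: "smooth_on U f"
  shows "pd a (pd b f) p = pd b (pd a f) p"
proof -
  have df: "f differentiable_on U" using sm smooth_on_diff_on by blast
  have dga: "pd a f differentiable_on U" and dgb: "pd b f differentiable_on U"
    using sm smooth_on_pd smooth_on_diff_on by blast+
  have ca: "continuous (at p) (pd a (pd b f))"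
    using smooth_diff_at[OF smooth_on_pd[OF smooth_on_pd[OF sm]] U(1,2)] differentiable_imp_continuous_within by blast
  have cb: "continuous (at p) (pd b (pd a f))"
    using smooth_diff_at[OF smooth_on_pd[OF smooth_on_pd[OF sm]] U(1,2)] differentiable_imp_continuous_within by blast
  define L1 where "L1 = pd a (pd b f) p"
  define L2 where "L2 = pd b (pd a f) p"
  have "norm (L1 - L2) \<le> 18 * e" if e: "e > 0" for e
  proof -
    obtain d1 where d1: "d1 > 0" "\<And>t. 0 < t \<and> t < d1 \<Longrightarrow>
     norm (f (p + t *\<^sub>R axis a 1 + t *\<^sub>R axis b 1) - f (p + t *\<^sub>R axis a 1) - f (p + t *\<^sub>R axis b 1) + f p
        - (t * t) *\<^sub>R L1) \<le> 9 * e * (t * t)"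
      using schwarz_aux[OF U df dgb ca e] unfolding L1_def by blast
    obtain d2 where d2: "d2 > 0" "\<And>t. 0 < t \<and> t < d2 \<Longrightarrow>
     norm (f (p + t *\<^sub>R axis b 1 + t *\<^sub>R axis a 1) - f (p + t *\<^sub>R axis b 1) - f (p + t *\<^sub>R axis a 1) + f p
        - (t * t) *\<^sub>R L2) \<le> 9 * e * (t * t)"
      using schwarz_aux[OF U df dga cb e] unfolding L2_def by blast
    define t where "t = min d1 d2 / 2"
    have t: "0 < t" "t < d1" "t < d2" using d1 d2 by (auto simp: t_def)
    define X where "X = f (p + t *\<^sub>R axis a 1 + t *\<^sub>R axis b 1) - f (p + t *\<^sub>R axis a 1) - f (p + t *\<^sub>R axis b 1) + f p"
    have X2: "X = f (p + t *\<^sub>R axis b 1 + t *\<^sub>R axis a 1) - f (p + t *\<^sub>R axis b 1) - f (p + t *\<^sub>R axis a 1) + f p"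
      unfolding X_def by (simp add: algebra_simps)
    have n1: "norm (X - (t * t) *\<^sub>R L1) \<le> 9 * e * (t * t)" using d1(2)[of t] t unfolding X_def by simp
    have n2: "norm (X - (t * t) *\<^sub>R L2) \<le> 9 * e * (t * t)" using d2(2)[of t] t unfolding X2 by simp
    have "norm ((t * t) *\<^sub>R (L1 - L2)) \<le> 18 * e * (t * t)"
      using norm_triangle_ineq4[of "X - (t * t) *\<^sub>R L2" "X - (t * t) *\<^sub>R L1"] n1 n2
      by (simp add: algebra_simps)
    moreover have "norm ((t * t) *\<^sub>R (L1 - L2)) = (t * t) * norm (L1 - L2)" using t by simp
    ultimately have "(t * t) * norm (L1 - L2) \<le> (t * t) * (18 * e)" by (simp add: algebra_simps)
    then show ?thesis using t by (simp add: mult_le_cancel_left_pos)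
  qed
  then have "norm (L1 - L2) \<le> 0 + e" if "e > 0" for e
    using \<open>\<And>e. e > 0 \<Longrightarrow> norm (L1 - L2) \<le> 18 * e\<close>[of "e / 18"] that by simp
  then have "norm (L1 - L2) \<le> 0" by (rule field_le_epsilon)
  then show ?thesis unfolding L1_def L2_def by simp
qed

lemma diff_cong_open:
  assumes "open U" "q \<in> U" "\<And>y. y \<in> U \<Longrightarrow> f y = g y" "f differentiable (at q)"
  shows "g differentiable (at q)"
  using assms has_derivative_transform_within_open unfolding differentiable_def by metis

lemma pd_add:
  assumes "f differentiable (at q)" "g differentiable (at q)"
  shows "pd i (\<lambda>y. f y + g y) q = pd i f q + pd i g q"
  using pd_has_derivative[OF has_derivative_add[OF assms[unfolded frechet_derivative_works]], of i]
  by (simp add: pd_def)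

lemma pd_diff:
  assumes "f differentiable (at q)" "g differentiable (at q)"
  shows "pd i (\<lambda>y. f y - g y) q = pd i f q - pd i g q"
  using pd_has_derivative[OF has_derivative_diff[OF assms[unfolded frechet_derivative_works]], of i]
  by (simp add: pd_def)

lemma pd_mult:
  fixes f g :: "real^'n::finite \<Rightarrow> real"
  assumes "f differentiable (at q)" "g differentiable (at q)"
  shows "pd i (\<lambda>y. f y * g y) q = pd i f q * g q + f q * pd i g q"
  using pd_has_derivative[OF has_derivative_mult[OF assms[unfolded frechet_derivative_works]], of i]
  by (simp add: pd_def)

lemma pd_scaleR:
  fixes f :: "real^'n::finite \<Rightarrow> real" and g :: "real^'n \<Rightarrow> 'v::real_normed_vector"
  assumes "f differentiable (at q)" "g differentiable (at q)"
  shows "pd i (\<lambda>y. f y *\<^sub>R g y) q = pd i f q *\<^sub>R g q + f q *\<^sub>R pd i g q"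
  using pd_has_derivative[OF has_derivative_scaleR[OF assms[unfolded frechet_derivative_works]], of i]
  by (simp add: pd_def)

lemma pd_sum:
  fixes f :: "'k \<Rightarrow> real^'n::finite \<Rightarrow> 'v::real_normed_vector"
  assumes "finite A" "\<And>k. k \<in> A \<Longrightarrow> f k differentiable (at q)"
  shows "pd i (\<lambda>y. \<Sum>k\<in>A. f k y) q = (\<Sum>k\<in>A. pd i (f k) q)"
proof -
  have "\<And>k. k \<in> A \<Longrightarrow> (f k has_derivative frechet_derivative (f k) (at q)) (at q)"
    using assms(2) frechet_derivative_works by blast
  from pd_has_derivative[OF has_derivative_sum[OF this], where i=i]
  show ?thesis by (simp add: pd_def)
qed

lemma pd_const: "pd i (\<lambda>y. c) q = 0"
  using pd_has_derivative[OF has_derivative_const[of c "at q"], of i] by simp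

lemma pd_cmult:
  fixes f :: "real^'n::finite \<Rightarrow> real"
  assumes "f differentiable (at q)"
  shows "pd i (\<lambda>y. f y * c) q = pd i f q * c"
  using pd_mult[OF assms differentiable_const[of c], of i] pd_const[of i c q] by simp

lemma iter_pd_diff:
  assumes U: "open U" and f: "smooth_on U f" and g: "smooth_on U g"
  shows "\<forall>q\<in>U. iter_pd is (\<lambda>y. f y - g y) q = iter_pd is f q - iter_pd is g q"
proof (induction "is")
  case Nil then show ?case by simp
next
  case (Cons i "is")
  show ?case
  proof
    fix q assume q: "q \<in> U"
    have "iter_pd (i # is) (\<lambda>y. f y - g y) q = pd i (\<lambda>y. iter_pd is f y - iter_pd is g y) q"
      using pd_cong_open[OF U q, of "iter_pd is (\<lambda>y. f y - g y)"] Cons by simp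
    also have "\<dots> = pd i (iter_pd is f) q - pd i (iter_pd is g) q"
      apply (rule pd_diff)
      using f g q U unfolding smooth_on_def differentiable_on_eq_differentiable_at[OF U] by blast+
    finally show "iter_pd (i # is) (\<lambda>y. f y - g y) q = iter_pd (i # is) f q - iter_pd (i # is) g q" by simp
  qed
qed

lemma smooth_diff:
  assumes U: "open U" and f: "smooth_on U f" and g: "smooth_on U g"
  shows "smooth_on U (\<lambda>y. f y - g y)"
  unfolding smooth_on_def
proof
  fix "is"
  show "iter_pd is (\<lambda>y. f y - g y) differentiable_on U"
    unfolding differentiable_on_eq_differentiable_at[OF U]
  proof
    fix q assume q: "q \<in> U"
    have "(\<lambda>y. iter_pd is f y - iter_pd is g y) differentiable (at q)"
      using f g q U unfolding smooth_on_def differentiable_on_eq_differentiable_at[OF U]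
      by (blast intro: differentiable_diff)
    then show "iter_pd is (\<lambda>y. f y - g y) differentiable (at q)"
      apply (rule diff_cong_open[OF U q, rotated])
      using iter_pd_diff[OF U f g] by simp
  qed
qed

lemma indep_eq:
  fixes X :: "'n::finite \<Rightarrow> 'v::real_vector"
  assumes ind: "\<forall>a c. a *\<^sub>R x0 + (\<Sum>k\<in>UNIV. c k *\<^sub>R X k) = 0 \<longrightarrow> a = 0 \<and> (\<forall>k. c k = 0)"
    and eq: "a1 *\<^sub>R x0 + (\<Sum>k\<in>UNIV. c1 k *\<^sub>R X k) = a2 *\<^sub>R x0 + (\<Sum>k\<in>UNIV. c2 k *\<^sub>R X k)"
  shows "a1 = a2 \<and> (\<forall>k. c1 k = c2 k)"
proof -
  have "(a1 - a2) *\<^sub>R x0 + (\<Sum>k\<in>UNIV. (c1 k - c2 k) *\<^sub>R X k) = 0"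
    using eq by (simp add: algebra_simps sum_subtractf)
  then show ?thesis using ind by fastforce
qed

lemma sym_coeffs:
  fixes U :: "(real^'n::finite) set" and x :: "real^'n \<Rightarrow> real^'m::finite"
  assumes hyp: "centroaffine_hypersurface U x eps G h" and pU: "p \<in> U"
  shows "h i j p = h j i p \<and> G k i j p = G k j i p"
proof -
  have U: "open U" and sx: "smooth_on U x" and eps: "eps = 1 \<or> eps = -1"
    and ind: "\<forall>a c. a *\<^sub>R x p + (\<Sum>k\<in>UNIV. c k *\<^sub>R pd k x p) = 0 \<longrightarrow> a = 0 \<and> (\<forall>k. c k = 0)"
    and gf: "\<And>i j. pd i (pd j x) p = (\<Sum>k\<in>UNIV. G k i j p *\<^sub>R pd k x p) + h i j p *\<^sub>R (- eps *\<^sub>R x p)"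
    using hyp pU unfolding centroaffine_hypersurface_def by auto
  have "pd i (pd j x) p = pd j (pd i x) p" by (rule schwarz[OF U pU sx])
  then have "(- eps * h i j p) *\<^sub>R x p + (\<Sum>k\<in>UNIV. G k i j p *\<^sub>R pd k x p)
     = (- eps * h j i p) *\<^sub>R x p + (\<Sum>k\<in>UNIV. G k j i p *\<^sub>R pd k x p)"
    unfolding gf by (simp add: algebra_simps)
  from indep_eq[OF ind this] eps show ?thesis by auto
qed

lemma vsum_s1: fixes X :: "'n::finite \<Rightarrow> 'v::real_vector" and x0 :: 'v
  shows "(\<Sum>k\<in>UNIV. g k *\<^sub>R ((\<Sum>m\<in>UNIV. G m k *\<^sub>R X m) + (H k * e) *\<^sub>R x0))
      = (\<Sum>k\<in>UNIV. (\<Sum>m\<in>UNIV. g m * G k m) *\<^sub>R X k) + (\<Sum>m\<in>UNIV. g m * H m * e) *\<^sub>R x0"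
proof -
  have "(\<Sum>k\<in>UNIV. g k *\<^sub>R ((\<Sum>m\<in>UNIV. G m k *\<^sub>R X m) + (H k * e) *\<^sub>R x0))
     = (\<Sum>k\<in>UNIV. (\<Sum>m\<in>UNIV. (g k * G m k) *\<^sub>R X m)) + (\<Sum>k\<in>UNIV. (g k * H k * e) *\<^sub>R x0)"
    by (simp add: scaleR_add_right sum.distrib scaleR_sum_right mult.assoc)
  also have "(\<Sum>k\<in>UNIV. (\<Sum>m\<in>UNIV. (g k * G m k) *\<^sub>R X m)) = (\<Sum>m\<in>UNIV. (\<Sum>k\<in>UNIV. (g k * G m k) *\<^sub>R X m))"
    by (rule sum.swap)
  also have "\<dots> = (\<Sum>m\<in>UNIV. (\<Sum>k\<in>UNIV. g k * G m k) *\<^sub>R X m)"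
    by (simp add: scaleR_sum_left)
  finally show ?thesis by (simp add: scaleR_sum_left)
qed

lemma vsum_s2: fixes X :: "'n::finite \<Rightarrow> 'v::real_vector"
  shows "c *\<^sub>R X l = (\<Sum>k\<in>UNIV. (c * (if k = l then 1 else 0)) *\<^sub>R X k)"
proof -
  have "\<And>k. (c * (if k = l then 1 else 0)) *\<^sub>R X k = (if k = l then c *\<^sub>R X k else 0)" by simp
  then show ?thesis by simp
qed

lemma vsum_s3: fixes X :: "'n::finite \<Rightarrow> 'v::real_vector"
  shows "(\<Sum>k\<in>UNIV. dg k *\<^sub>R X k) + ((\<Sum>k\<in>UNIV. (A k) *\<^sub>R X k) + a *\<^sub>R x0) + (b *\<^sub>R x0 + (\<Sum>k\<in>UNIV. (c k) *\<^sub>R X k))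
   = (a + b) *\<^sub>R x0 + (\<Sum>k\<in>UNIV. (dg k + A k + c k) *\<^sub>R X k)"
  by (simp add: algebra_simps sum.distrib scaleR_add_left)

lemma third_deriv:
  fixes U :: "(real^'n::finite) set" and x :: "real^'n \<Rightarrow> real^'m::finite"
  assumes hyp: "centroaffine_hypersurface U x eps G h" and pU: "p \<in> U"
    and sh: "\<forall>i j. smooth_on U (h i j)" and sG: "\<forall>k i j. smooth_on U (G k i j)"
  shows "pd l (pd i (pd j x)) p =
     (- eps * (pd l (h i j) p + (\<Sum>m\<in>UNIV. G m i j p * h l m p))) *\<^sub>R x p
     + (\<Sum>k\<in>UNIV. (pd l (G k i j) p + (\<Sum>m\<in>UNIV. G m i j p * G k l m p)
          - eps * h i j p * (if k = l then 1 else 0)) *\<^sub>R pd k x p)"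
proof -
  have U: "open U" and sx: "smooth_on U x"
    and gf: "\<And>q i j. q \<in> U \<Longrightarrow> pd i (pd j x) q = (\<Sum>k\<in>UNIV. G k i j q *\<^sub>R pd k x q) + (h i j q * - eps) *\<^sub>R x q"
    using hyp unfolding centroaffine_hypersurface_def by auto
  have dx: "x differentiable (at p)" using smooth_diff_at[OF sx U pU] .
  have dxk: "\<And>k. pd k x differentiable (at p)" using smooth_diff_at[OF smooth_on_pd[OF sx] U pU] .
  have dG: "\<And>k i j. G k i j differentiable (at p)" using sG smooth_diff_at[OF _ U pU] by blast
  have dh: "\<And>i j. h i j differentiable (at p)" using sh smooth_diff_at[OF _ U pU] by blast
  have "pd l (pd i (pd j x)) p = pd l (\<lambda>q. (\<Sum>k\<in>UNIV. G k i j q *\<^sub>R pd k x q) + (h i j q * - eps) *\<^sub>R x q) p"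
    by (rule pd_cong_open[OF U pU]) (simp add: gf)
  also have "\<dots> = (\<Sum>k\<in>UNIV. pd l (G k i j) p *\<^sub>R pd k x p + G k i j p *\<^sub>R pd l (pd k x) p)
       + ((pd l (h i j) p * - eps) *\<^sub>R x p + (h i j p * - eps) *\<^sub>R pd l x p)"
    apply (subst pd_add)
      apply (rule differentiable_sum, simp, blast intro: differentiable_scaleR dG dxk)
     apply (intro differentiable_scaleR differentiable_mult dh dx differentiable_const)
    apply (subst pd_sum, simp)
     apply (intro differentiable_scaleR dG dxk)
    apply (subst pd_scaleR[OF _ dx])
     apply (intro differentiable_mult dh differentiable_const)
    apply (subst pd_cmult[OF dh])
    apply (subst pd_scaleR[OF dG dxk])
    apply simp
    done
  also have "\<dots> = (\<Sum>k\<in>UNIV. pd l (G k i j) p *\<^sub>R pd k x p)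
       + (\<Sum>k\<in>UNIV. G k i j p *\<^sub>R ((\<Sum>m\<in>UNIV. G m l k p *\<^sub>R pd m x p) + (h l k p * - eps) *\<^sub>R x p))
       + ((pd l (h i j) p * - eps) *\<^sub>R x p + (h i j p * - eps) *\<^sub>R pd l x p)"
    by (simp add: gf[OF pU] sum.distrib)
  also have "\<dots> = (- eps * (pd l (h i j) p + (\<Sum>m\<in>UNIV. G m i j p * h l m p))) *\<^sub>R x p
     + (\<Sum>k\<in>UNIV. (pd l (G k i j) p + (\<Sum>m\<in>UNIV. G m i j p * G k l m p)
          - eps * h i j p * (if k = l then 1 else 0)) *\<^sub>R pd k x p)"
    unfolding vsum_s1 vsum_s2[of "h i j p * - eps" "\<lambda>k. pd k x p" l] vsum_s3
  proof (rule arg_cong2[where f="\<lambda>a b. a *\<^sub>R x p + b"])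
    show "(\<Sum>m\<in>UNIV. G m i j p * h l m p * - eps) + pd l (h i j) p * - eps = - eps * (pd l (h i j) p + (\<Sum>m\<in>UNIV. G m i j p * h l m p))"
      by (simp add: algebra_simps sum_distrib_left sum_distrib_right)
    show "(\<Sum>k\<in>UNIV. (pd l (G k i j) p + (\<Sum>m\<in>UNIV. G m i j p * G k l m p) + h i j p * - eps * (if k = l then 1 else 0)) *\<^sub>R pd k x p) =
    (\<Sum>k\<in>UNIV. (pd l (G k i j) p + (\<Sum>m\<in>UNIV. G m i j p * G k l m p) - eps * h i j p * (if k = l then 1 else 0)) *\<^sub>R pd k x p)"
      by (simp add: algebra_simps)
  qed
  finally show ?thesis .
qed

lemma gauss_codazzi:
  fixes U :: "(real^'n::finite) set" and x :: "real^'n \<Rightarrow> real^'m::finite"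
  assumes hyp: "centroaffine_hypersurface U x eps G h" and pU: "p \<in> U"
    and sh: "\<forall>i j. smooth_on U (h i j)" and sG: "\<forall>k i j. smooth_on U (G k i j)"
  shows "pd l (h i j) p + (\<Sum>m\<in>UNIV. G m i j p * h l m p) = pd i (h l j) p + (\<Sum>m\<in>UNIV. G m l j p * h i m p)"
    and "pd l (G k i j) p + (\<Sum>m\<in>UNIV. G m i j p * G k l m p) - eps * h i j p * (if k = l then 1 else 0)
       = pd i (G k l j) p + (\<Sum>m\<in>UNIV. G m l j p * G k i m p) - eps * h l j p * (if k = i then 1 else 0)"
proof -
  have U: "open U" and sx: "smooth_on U x" and eps: "eps = 1 \<or> eps = -1"
    and ind: "\<forall>a c. a *\<^sub>R x p + (\<Sum>k\<in>UNIV. c k *\<^sub>R pd k x p) = 0 \<longrightarrow> a = 0 \<and> (\<forall>k. c k = 0)"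
    using hyp pU unfolding centroaffine_hypersurface_def by auto
  have "pd l (pd i (pd j x)) p = pd i (pd l (pd j x)) p" by (rule schwarz[OF U pU smooth_on_pd[OF sx]])
  then have e: "- eps * (pd l (h i j) p + (\<Sum>m\<in>UNIV. G m i j p * h l m p)) = - eps * (pd i (h l j) p + (\<Sum>m\<in>UNIV. G m l j p * h i m p))
     \<and> (\<forall>k. pd l (G k i j) p + (\<Sum>m\<in>UNIV. G m i j p * G k l m p) - eps * h i j p * (if k = l then 1 else 0)
       = pd i (G k l j) p + (\<Sum>m\<in>UNIV. G m l j p * G k i m p) - eps * h l j p * (if k = i then 1 else 0))"
    unfolding third_deriv[OF hyp pU sh sG] by (rule indep_eq[OF ind])
  then show "pd l (h i j) p + (\<Sum>m\<in>UNIV. G m i j p * h l m p) = pd i (h l j) p + (\<Sum>m\<in>UNIV. G m l j p * h i m p)"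
    using eps by auto
  show "pd l (G k i j) p + (\<Sum>m\<in>UNIV. G m i j p * G k l m p) - eps * h i j p * (if k = l then 1 else 0)
       = pd i (G k l j) p + (\<Sum>m\<in>UNIV. G m l j p * G k i m p) - eps * h l j p * (if k = i then 1 else 0)"
    using e by blast
qed

lemma alg_C:
  fixes Gm Ga K dh :: "'n::finite \<Rightarrow> 'n \<Rightarrow> 'n \<Rightarrow> real" and hh :: "'n \<Rightarrow> 'n \<Rightarrow> real"
  assumes GK: "\<And>k i j. Gm k i j = Ga k i j + K k i j"
    and Gs: "\<And>k i j. Ga k i j = Ga k j i"
    and LC: "\<And>k i j. dh k i j = (\<Sum>l\<in>UNIV. Ga l k i * hh l j + Ga l k j * hh i l)"
    and cod: "dh l i j + (\<Sum>m\<in>UNIV. Gm m i j * hh l m) = dh i l j + (\<Sum>m\<in>UNIV. Gm m l j * hh i m)"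
  shows "(\<Sum>m\<in>UNIV. K m i j * hh l m) = (\<Sum>m\<in>UNIV. K m l j * hh i m)"
proof -
  have "dh l i j + (\<Sum>m\<in>UNIV. Ga m i j * hh l m) = (\<Sum>m\<in>UNIV. Ga m l i * hh m j + Ga m l j * hh i m + Ga m i j * hh l m)"
    by (simp add: LC sum.distrib)
  also have "\<dots> = (\<Sum>m\<in>UNIV. Ga m i l * hh m j + Ga m i j * hh l m + Ga m l j * hh i m)"
    by (rule sum.cong) (auto simp: Gs[of _ l i])
  also have "\<dots> = dh i l j + (\<Sum>m\<in>UNIV. Ga m l j * hh i m)"
    by (simp add: LC sum.distrib)
  finally have "dh l i j + (\<Sum>m\<in>UNIV. Ga m i j * hh l m) = dh i l j + (\<Sum>m\<in>UNIV. Ga m l j * hh i m)" .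
  with cod show ?thesis by (simp add: GK distrib_right sum.distrib)
qed

lemma alg_R:
  fixes Ga K :: "'n::finite \<Rightarrow> 'n \<Rightarrow> 'n \<Rightarrow> real" and dGa dK :: "'n \<Rightarrow> 'n \<Rightarrow> 'n \<Rightarrow> 'n \<Rightarrow> real"
    and hh :: "'n \<Rightarrow> 'n \<Rightarrow> real"
  assumes Gs: "\<And>k i j. Ga k i j = Ga k j i"
    and gauss: "dGa l k i j + dK l k i j + (\<Sum>m\<in>UNIV. (Ga m i j + K m i j) * (Ga k l m + K k l m)) - eps * hh i j * (if k = l then 1 else 0)
       = dGa i k l j + dK i k l j + (\<Sum>m\<in>UNIV. (Ga m l j + K m l j) * (Ga k i m + K k i m)) - eps * hh l j * (if k = i then 1 else 0)"
    and Qs: "dK l k i j + (\<Sum>m\<in>UNIV. Ga k l m * K m i j) - (\<Sum>m\<in>UNIV. Ga m l i * K k m j) - (\<Sum>m\<in>UNIV. Ga m l j * K k i m)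
       = dK i k l j + (\<Sum>m\<in>UNIV. Ga k i m * K m l j) - (\<Sum>m\<in>UNIV. Ga m i l * K k m j) - (\<Sum>m\<in>UNIV. Ga m i j * K k l m)"
  shows "dGa l k i j - dGa i k l j + (\<Sum>m\<in>UNIV. Ga k l m * Ga m i j - Ga k i m * Ga m l j)
     = eps * (hh i j * (if k = l then 1 else 0) - hh l j * (if k = i then 1 else 0))
       - (\<Sum>m\<in>UNIV. K k l m * K m i j - K k i m * K m l j)"
proof -
  have s: "(\<Sum>m\<in>UNIV. Ga m l i * K k m j) = (\<Sum>m\<in>UNIV. Ga m i l * K k m j)" using Gs by simp
  show ?thesis using gauss Qs s
    by (simp add: algebra_simps sum.distrib sum_subtractf)
qed

lemma alg_Ric:
  fixes Ga K :: "'n::finite \<Rightarrow> 'n \<Rightarrow> 'n \<Rightarrow> real" and dGa Q dK :: "'n \<Rightarrow> 'n \<Rightarrow> 'n \<Rightarrow> 'n \<Rightarrow> real"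
    and ddK :: "'n \<Rightarrow> 'n \<Rightarrow> real"
  assumes dKdef: "\<And>a x y z. dK a x y z = Q a x y z - (\<Sum>l\<in>UNIV. Ga x a l * K l y z) + (\<Sum>l\<in>UNIV. Ga l a y * K x l z) + (\<Sum>l\<in>UNIV. Ga l a z * K x y l)"
    and dds: "ddK a b = ddK b a"
  shows "(ddK a b + (\<Sum>m\<in>UNIV. dGa a k b m * K m i j + Ga k b m * dK a m i j)
              - (\<Sum>m\<in>UNIV. dGa a m b i * K k m j + Ga m b i * dK a k m j)
              - (\<Sum>m\<in>UNIV. dGa a m b j * K k i m + Ga m b j * dK a k i m))
       - (ddK b a + (\<Sum>m\<in>UNIV. dGa b k a m * K m i j + Ga k a m * dK b m i j)
              - (\<Sum>m\<in>UNIV. dGa b m a i * K k m j + Ga m a i * dK b k m j)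
              - (\<Sum>m\<in>UNIV. dGa b m a j * K k i m + Ga m a j * dK b k i m))
     = (\<Sum>m\<in>UNIV. (dGa a k b m - dGa b k a m + (\<Sum>l\<in>UNIV. Ga k a l * Ga l b m - Ga k b l * Ga l a m)) * K m i j)
       - (\<Sum>m\<in>UNIV. (dGa a m b i - dGa b m a i + (\<Sum>l\<in>UNIV. Ga m a l * Ga l b i - Ga m b l * Ga l a i)) * K k m j)
       - (\<Sum>m\<in>UNIV. (dGa a m b j - dGa b m a j + (\<Sum>l\<in>UNIV. Ga m a l * Ga l b j - Ga m b l * Ga l a j)) * K k i m)
       + ((\<Sum>m\<in>UNIV. Ga k b m * Q a m i j - Ga m b i * Q a k m j - Ga m b j * Q a k i m)
         - (\<Sum>m\<in>UNIV. Ga k a m * Q b m i j - Ga m a i * Q b k m j - Ga m a j * Q b k i m))"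
proof -
  have sw: "\<And>f :: 'n \<Rightarrow> 'n \<Rightarrow> real. (\<Sum>m\<in>UNIV. \<Sum>l\<in>UNIV. f m l) = (\<Sum>m\<in>UNIV. \<Sum>l\<in>UNIV. f l m)"
    by (rule sum.swap)
  note S = sum_distrib_left sum_distrib_right sum.distrib sum_subtractf distrib_left distrib_right
     right_diff_distrib left_diff_distrib
  have A1: "(\<Sum>m\<in>UNIV. \<Sum>l\<in>UNIV. Ga k a l * Ga l b m * K m i j) = (\<Sum>m\<in>UNIV. \<Sum>l\<in>UNIV. Ga k a m * (Ga m b l * K l i j))"
    by (subst sw) (simp add: mult.assoc)
  have A1': "(\<Sum>m\<in>UNIV. \<Sum>l\<in>UNIV. Ga k b l * Ga l a m * K m i j) = (\<Sum>m\<in>UNIV. \<Sum>l\<in>UNIV. Ga k b m * (Ga m a l * K l i j))"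
    by (subst sw) (simp add: mult.assoc)
  have A2: "(\<Sum>m\<in>UNIV. \<Sum>l\<in>UNIV. Ga m a i * (Ga k b l * K l m j)) = (\<Sum>m\<in>UNIV. \<Sum>l\<in>UNIV. Ga k b m * (Ga l a i * K m l j))"
    by (subst sw) (simp add: mult_ac)
  have A2': "(\<Sum>m\<in>UNIV. \<Sum>l\<in>UNIV. Ga m b i * (Ga k a l * K l m j)) = (\<Sum>m\<in>UNIV. \<Sum>l\<in>UNIV. Ga k a m * (Ga l b i * K m l j))"
    by (subst sw) (simp add: mult_ac)
  have A3: "(\<Sum>m\<in>UNIV. \<Sum>l\<in>UNIV. Ga m a j * (Ga k b l * K l i m)) = (\<Sum>m\<in>UNIV. \<Sum>l\<in>UNIV. Ga k b m * (Ga l a j * K m i l))"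
    by (subst sw) (simp add: mult_ac)
  have A3': "(\<Sum>m\<in>UNIV. \<Sum>l\<in>UNIV. Ga m b j * (Ga k a l * K l i m)) = (\<Sum>m\<in>UNIV. \<Sum>l\<in>UNIV. Ga k a m * (Ga l b j * K m i l))"
    by (subst sw) (simp add: mult_ac)
  have A4: "(\<Sum>m\<in>UNIV. \<Sum>l\<in>UNIV. Ga m a l * Ga l b i * K k m j) = (\<Sum>m\<in>UNIV. \<Sum>l\<in>UNIV. Ga m b i * (Ga l a m * K k l j))"
    by (subst sw) (simp add: mult_ac)
  have A4': "(\<Sum>m\<in>UNIV. \<Sum>l\<in>UNIV. Ga m b l * Ga l a i * K k m j) = (\<Sum>m\<in>UNIV. \<Sum>l\<in>UNIV. Ga m a i * (Ga l b m * K k l j))"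
    by (subst sw) (simp add: mult_ac)
  have A5: "(\<Sum>m\<in>UNIV. \<Sum>l\<in>UNIV. Ga m a j * (Ga l b i * K k l m)) = (\<Sum>m\<in>UNIV. \<Sum>l\<in>UNIV. Ga m b i * (Ga l a j * K k m l))"
    by (subst sw) (simp add: mult_ac)
  have A5': "(\<Sum>m\<in>UNIV. \<Sum>l\<in>UNIV. Ga m b j * (Ga l a i * K k l m)) = (\<Sum>m\<in>UNIV. \<Sum>l\<in>UNIV. Ga m a i * (Ga l b j * K k m l))"
    by (subst sw) (simp add: mult_ac)
  have A6: "(\<Sum>m\<in>UNIV. \<Sum>l\<in>UNIV. Ga m a l * Ga l b j * K k i m) = (\<Sum>m\<in>UNIV. \<Sum>l\<in>UNIV. Ga m b j * (Ga l a m * K k i l))"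
    by (subst sw) (simp add: mult_ac)
  have A6': "(\<Sum>m\<in>UNIV. \<Sum>l\<in>UNIV. Ga m b l * Ga l a j * K k i m) = (\<Sum>m\<in>UNIV. \<Sum>l\<in>UNIV. Ga m a j * (Ga l b m * K k i l))"
    by (subst sw) (simp add: mult_ac)
  show ?thesis
    unfolding dKdef
    apply (simp only: S)
    apply (simp only: A1 A1' A2 A2' A3 A3' A4 A4' A5 A5' A6 A6' dds mult.assoc)
    apply (simp add: algebra_simps)
    apply (simp only: sw[of "\<lambda>m n. Ga n a m * (Ga k b n * K m i j)"] sw[of "\<lambda>m n. Ga m a n * (Ga n b i * K k m j)"]
       sw[of "\<lambda>m n. Ga m a n * (Ga n b j * K k i m)"] sw[of "\<lambda>m n. Ga m a i * (Ga n b m * K k n j)"]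
       sw[of "\<lambda>m n. Ga m a j * (Ga n b m * K k i n)"] sw[of "\<lambda>m n. Ga m b n * (Ga k a m * K n i j)"])
    apply (simp add: algebra_simps)
    done
qed

lemma alg_S:
  fixes Ga :: "'n::finite \<Rightarrow> 'n \<Rightarrow> 'n \<Rightarrow> real" and hh :: "'n \<Rightarrow> 'n \<Rightarrow> real" and dh :: "'n \<Rightarrow> 'n \<Rightarrow> 'n \<Rightarrow> real"
  assumes Gs: "\<And>k i j. Ga k i j = Ga k j i" and hs: "\<And>i j. hh i j = hh j i"
    and LC: "\<And>k i j. dh k i j = (\<Sum>l\<in>UNIV. Ga l k i * hh l j + Ga l k j * hh i l)"
    and Sdef: "\<And>l k i j. S l k i j = hh i j * (if k = l then 1 else 0) + hh i l * (if k = j then 1 else 0) + hh j l * (if k = i then 1 else 0)"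
  shows "(dh a i j * (if k = b then 1 else 0) + dh a i b * (if k = j then 1 else 0) + dh a j b * (if k = i then 1 else 0))
       - (dh b i j * (if k = a then 1 else 0) + dh b i a * (if k = j then 1 else 0) + dh b j a * (if k = i then 1 else 0))
     = (\<Sum>m\<in>UNIV. Ga k b m * S a m i j - Ga m b i * S a k m j - Ga m b j * S a k i m)
         - (\<Sum>m\<in>UNIV. Ga k a m * S b m i j - Ga m a i * S b k m j - Ga m a j * S b k i m)"
proof -
  have f: "(\<Sum>m\<in>UNIV. Ga k b m * S a m i j - Ga m b i * S a k m j - Ga m b j * S a k i m)
     = Ga k b a * hh i j - (if k = a then 1 else 0) * ((\<Sum>m\<in>UNIV. Ga m b i * hh m j) + (\<Sum>m\<in>UNIV. Ga m b j * hh i m))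
       - (if k = j then 1 else 0) * (\<Sum>m\<in>UNIV. Ga m b i * hh m a) - (if k = i then 1 else 0) * (\<Sum>m\<in>UNIV. Ga m b j * hh m a)" for a b
  proof -
    have "(\<Sum>m\<in>UNIV. Ga k b m * S a m i j) = Ga k b a * hh i j + Ga k b j * hh i a + Ga k b i * hh j a"
      by (simp add: Sdef algebra_simps sum.distrib if_distrib[where f="\<lambda>x. _ * x"] cong: if_cong)
    moreover have "(\<Sum>m\<in>UNIV. Ga m b i * S a k m j) = (if k = a then 1 else 0) * (\<Sum>m\<in>UNIV. Ga m b i * hh m j)
        + (if k = j then 1 else 0) * (\<Sum>m\<in>UNIV. Ga m b i * hh m a) + hh j a * Ga k b i"
      by (simp add: Sdef algebra_simps sum.distrib sum_distrib_left if_distrib[where f="\<lambda>x. _ * x"] cong: if_cong)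
    moreover have "(\<Sum>m\<in>UNIV. Ga m b j * S a k i m) = (if k = a then 1 else 0) * (\<Sum>m\<in>UNIV. Ga m b j * hh i m)
        + hh i a * Ga k b j + (if k = i then 1 else 0) * (\<Sum>m\<in>UNIV. Ga m b j * hh m a)"
      by (simp add: Sdef algebra_simps sum.distrib sum_distrib_left if_distrib[where f="\<lambda>x. _ * x"] cong: if_cong)
    ultimately show ?thesis by (simp only: sum_subtractf) (simp add: algebra_simps split del: if_split)
  qed
  have gab: "\<And>l. Ga l b a = Ga l a b" using Gs by simp
  show ?thesis unfolding f
    by (simp add: LC sum.distrib gab algebra_simps split del: if_split)
qed

lemma coordE:
  fixes U :: "(real^'n::finite) set" and x :: "real^'n \<Rightarrow> real^'m::finite"
  assumes hyp: "centroaffine_hypersurface U x eps G h"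
    and smooth_h: "\<forall>i j. smooth_on U (h i j)"
    and smooth_G: "\<forall>k i j. smooth_on U (G k i j)"
    and smooth_hG: "\<forall>k i j. smooth_on U (hG k i j)"
    and LC: "levi_civita U h hG"
    and smooth_mu: "smooth_on U mu"
    and cond: "\<forall>q\<in>U. \<forall>l k i j.
        cov_deriv_K hG (diff_tensor G hG) l k i j q =
          mu q * (h i j q * (if k = l then 1 else 0) + h i l q * (if k = j then 1 else 0)
                  + h j l q * (if k = i then 1 else 0))"
    and pU: "p \<in> U"
  defines "K \<equiv> \<lambda>k i j. diff_tensor G hG k i j p"
  defines "S \<equiv> \<lambda>l k i j. h i j p * (if k = l then 1 else 0) + h i l p * (if k = j then 1 else 0) + h j l p * (if k = i then 1 else 0)"
  defines "Rr \<equiv> \<lambda>l k i j. eps * (h i j p * (if k = l then 1 else 0) - h l j p * (if k = i then 1 else 0))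
       - (\<Sum>m\<in>UNIV. K k l m * K m i j - K k i m * K m l j)"
  shows "pd a mu p * S b k i j - pd b mu p * S a k i j
     = (\<Sum>m\<in>UNIV. Rr a k b m * K m i j) - (\<Sum>m\<in>UNIV. Rr a m b i * K k m j) - (\<Sum>m\<in>UNIV. Rr a m b j * K k i m)"
proof -
  have U: "open U" using hyp unfolding centroaffine_hypersurface_def by auto
  define Kt where "Kt = diff_tensor G hG"
  have Kt_eq: "\<And>k i j. Kt k i j = (\<lambda>q. G k i j q - hG k i j q)"
    unfolding Kt_def diff_tensor_def by (rule ext) simp
  have sKt: "\<And>k i j. smooth_on U (Kt k i j)"
    unfolding Kt_eq using smooth_diff[OF U] smooth_G smooth_hG by blast
  have dKt: "\<And>k i j. Kt k i j differentiable (at p)" using sKt smooth_diff_at[OF _ U pU] by blast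
  have dpKt: "\<And>b k i j. pd b (Kt k i j) differentiable (at p)" using sKt smooth_on_pd smooth_diff_at[OF _ U pU] by blast
  have dhG: "\<And>k i j. hG k i j differentiable (at p)" using smooth_hG smooth_diff_at[OF _ U pU] by blast
  have dG: "\<And>k i j. G k i j differentiable (at p)" using smooth_G smooth_diff_at[OF _ U pU] by blast
  have dh: "\<And>i j. h i j differentiable (at p)" using smooth_h smooth_diff_at[OF _ U pU] by blast
  have dmu: "mu differentiable (at p)" using smooth_mu smooth_diff_at[OF _ U pU] by blast
  have KK: "K = (\<lambda>k i j. Kt k i j p)" unfolding K_def Kt_def ..
  have hs: "\<And>i j. h i j p = h j i p" using sym_coeffs[OF hyp pU] by blast
  have Gs: "\<And>k i j. G k i j p = G k j i p" using sym_coeffs[OF hyp pU] by blast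
  have hGs: "\<And>k i j. hG k i j p = hG k j i p" and LCp: "\<And>k i j. pd k (h i j) p = (\<Sum>l\<in>UNIV. hG l k i p * h l j p + hG l k j p * h i l p)"
    using LC pU unfolding levi_civita_def by auto
  have condp: "\<And>l k i j. pd l (Kt k i j) p + (\<Sum>m\<in>UNIV. hG k l m p * Kt m i j p) - (\<Sum>m\<in>UNIV. hG m l i p * Kt k m j p)
       - (\<Sum>m\<in>UNIV. hG m l j p * Kt k i m p) = mu p * S l k i j"
    using cond pU unfolding S_def cov_deriv_K_def Kt_def by auto
  have R1: "pd a (cov_deriv_K hG Kt b k i j) p = pd a mu p * S b k i j
      + mu p * (pd a (h i j) p * (if k = b then 1 else 0) + pd a (h i b) p * (if k = j then 1 else 0) + pd a (h j b) p * (if k = i then 1 else 0))"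
    for a b k i j
  proof -
    have "pd a (cov_deriv_K hG Kt b k i j) p = pd a (\<lambda>q. mu q * (h i j q * (if k = b then 1 else 0) + h i b q * (if k = j then 1 else 0)
                  + h j b q * (if k = i then 1 else 0))) p"
      by (rule pd_cong_open[OF U pU]) (use cond Kt_def in auto)
    also have "\<dots> = pd a mu p * S b k i j
      + mu p * (pd a (h i j) p * (if k = b then 1 else 0) + pd a (h i b) p * (if k = j then 1 else 0) + pd a (h j b) p * (if k = i then 1 else 0))"
      apply (subst pd_mult[OF dmu])
       apply (intro differentiable_add differentiable_mult dh differentiable_const)
      apply (subst pd_add, (intro differentiable_add differentiable_mult dh differentiable_const)+)
      apply (subst pd_add, (intro differentiable_add differentiable_mult dh differentiable_const)+)
      apply (simp add: pd_cmult dh S_def)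
      done
    finally show ?thesis .
  qed
  have R2: "pd a (cov_deriv_K hG Kt b k i j) p = pd a (pd b (Kt k i j)) p
       + (\<Sum>m\<in>UNIV. pd a (hG k b m) p * Kt m i j p + hG k b m p * pd a (Kt m i j) p)
       - (\<Sum>m\<in>UNIV. pd a (hG m b i) p * Kt k m j p + hG m b i p * pd a (Kt k m j) p)
       - (\<Sum>m\<in>UNIV. pd a (hG m b j) p * Kt k i m p + hG m b j p * pd a (Kt k i m) p)"
    for a b k i j
  proof -
    have e: "cov_deriv_K hG Kt b k i j = (\<lambda>q. pd b (Kt k i j) q + (\<Sum>m\<in>UNIV. hG k b m q * Kt m i j q)
       - (\<Sum>m\<in>UNIV. hG m b i q * Kt k m j q) - (\<Sum>m\<in>UNIV. hG m b j q * Kt k i m q))"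
      unfolding cov_deriv_K_def ..
    have ds: "\<And>f g :: 'n \<Rightarrow> real^'n \<Rightarrow> real. (\<And>m. f m differentiable (at p)) \<Longrightarrow> (\<And>m. g m differentiable (at p)) \<Longrightarrow>
       (\<lambda>q. \<Sum>m\<in>UNIV. f m q * g m q) differentiable (at p)"
      by (rule differentiable_sum) (auto intro: differentiable_mult)
    have ps: "\<And>f g :: 'n \<Rightarrow> real^'n \<Rightarrow> real. (\<And>m. f m differentiable (at p)) \<Longrightarrow> (\<And>m. g m differentiable (at p)) \<Longrightarrow>
       pd a (\<lambda>q. \<Sum>m\<in>UNIV. f m q * g m q) p = (\<Sum>m\<in>UNIV. pd a (f m) p * g m p + f m p * pd a (g m) p)"
      by (subst pd_sum) (auto intro: differentiable_mult simp: pd_mult)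
    show ?thesis unfolding e
      apply (subst pd_diff, (intro differentiable_diff differentiable_add dpKt ds dhG dKt)+)+
      apply (subst pd_add, (intro dpKt ds dhG dKt)+)
      apply (simp add: ps dhG dKt)
      done
  qed
  define Ga where "Ga = (\<lambda>k i j. hG k i j p)"
  define dGa where "dGa = (\<lambda>a k i j. pd a (hG k i j) p)"
  define dK where "dK = (\<lambda>a k i j. pd a (Kt k i j) p)"
  define Q where "Q = (\<lambda>a x y z. mu p * S a x y z)"
  have dKdef: "\<And>a x y z. dK a x y z = Q a x y z - (\<Sum>l\<in>UNIV. Ga x a l * K l y z) + (\<Sum>l\<in>UNIV. Ga l a y * K x l z) + (\<Sum>l\<in>UNIV. Ga l a z * K x y l)"
    using condp unfolding dK_def Q_def Ga_def KK by (smt (verit))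
  have dds: "pd a (pd b (Kt k i j)) p = pd b (pd a (Kt k i j)) p" by (rule schwarz[OF U pU sKt])
  note ric = alg_Ric[of dK Q Ga K "\<lambda>a b. pd a (pd b (Kt k i j)) p" a b dGa k i j, OF dKdef dds]
  have Sab: "(pd a (h i j) p * (if k = b then 1 else 0) + pd a (h i b) p * (if k = j then 1 else 0) + pd a (h j b) p * (if k = i then 1 else 0))
       - (pd b (h i j) p * (if k = a then 1 else 0) + pd b (h i a) p * (if k = j then 1 else 0) + pd b (h j a) p * (if k = i then 1 else 0))
     = (\<Sum>m\<in>UNIV. Ga k b m * S a m i j - Ga m b i * S a k m j - Ga m b j * S a k i m)
         - (\<Sum>m\<in>UNIV. Ga k a m * S b m i j - Ga m a i * S b k m j - Ga m a j * S b k i m)"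
    by (rule alg_S[where dh="\<lambda>a i j. pd a (h i j) p" and hh="\<lambda>i j. h i j p"]) (auto simp: Ga_def hGs hs LCp S_def)
  have Qfac: "(\<Sum>m\<in>UNIV. Ga k b m * Q a m i j - Ga m b i * Q a k m j - Ga m b j * Q a k i m)
         - (\<Sum>m\<in>UNIV. Ga k a m * Q b m i j - Ga m a i * Q b k m j - Ga m a j * Q b k i m)
     = mu p * ((\<Sum>m\<in>UNIV. Ga k b m * S a m i j - Ga m b i * S a k m j - Ga m b j * S a k i m)
         - (\<Sum>m\<in>UNIV. Ga k a m * S b m i j - Ga m a i * S b k m j - Ga m a j * S b k i m))"
    unfolding Q_def by (simp add: sum_distrib_left algebra_simps)
  have main: "pd a mu p * S b k i j - pd b mu p * S a k i j =
      (\<Sum>m\<in>UNIV. (dGa a k b m - dGa b k a m + (\<Sum>l\<in>UNIV. Ga k a l * Ga l b m - Ga k b l * Ga l a m)) * K m i j)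
       - (\<Sum>m\<in>UNIV. (dGa a m b i - dGa b m a i + (\<Sum>l\<in>UNIV. Ga m a l * Ga l b i - Ga m b l * Ga l a i)) * K k m j)
       - (\<Sum>m\<in>UNIV. (dGa a m b j - dGa b m a j + (\<Sum>l\<in>UNIV. Ga m a l * Ga l b j - Ga m b l * Ga l a j)) * K k i m)"
  proof -
    have m1: "mu p * (pd a (h i j) p * (if k = b then 1 else 0) + pd a (h i b) p * (if k = j then 1 else 0) + pd a (h j b) p * (if k = i then 1 else 0))
       - mu p * (pd b (h i j) p * (if k = a then 1 else 0) + pd b (h i a) p * (if k = j then 1 else 0) + pd b (h j a) p * (if k = i then 1 else 0))
     = mu p * ((\<Sum>m\<in>UNIV. Ga k b m * S a m i j - Ga m b i * S a k m j - Ga m b j * S a k i m)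
         - (\<Sum>m\<in>UNIV. Ga k a m * S b m i j - Ga m a i * S b k m j - Ga m a j * S b k i m))"
      using arg_cong[OF Sab, of "\<lambda>z. mu p * z"] by (simp only: right_diff_distrib)
    show ?thesis using R1[of a b k i j] R1[of b a k i j] R2[of a b k i j] R2[of b a k i j] ric m1 Qfac
      unfolding KK dGa_def dK_def Ga_def by linarith
  qed
  have Rh: "dGa l k i j - dGa i k l j + (\<Sum>m\<in>UNIV. Ga k l m * Ga m i j - Ga k i m * Ga m l j) = Rr l k i j" for l k i j
  proof -
    have dG: "\<And>l k i j. pd l (G k i j) p = dGa l k i j + dK l k i j"
      unfolding dGa_def dK_def Kt_eq by (simp add: pd_diff[OF dG dhG])
    have GK: "\<And>k i j. G k i j p = Ga k i j + K k i j" unfolding Ga_def KK Kt_eq by simp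
    have gauss: "dGa l k i j + dK l k i j + (\<Sum>m\<in>UNIV. (Ga m i j + K m i j) * (Ga k l m + K k l m)) - eps * h i j p * (if k = l then 1 else 0)
       = dGa i k l j + dK i k l j + (\<Sum>m\<in>UNIV. (Ga m l j + K m l j) * (Ga k i m + K k i m)) - eps * h l j p * (if k = i then 1 else 0)"
      using gauss_codazzi(2)[OF hyp pU smooth_h smooth_G, of l k i j] unfolding dG GK .
    have Sli: "S l k i j = S i k l j" unfolding S_def using hs by simp
    have Qs: "dK l k i j + (\<Sum>m\<in>UNIV. Ga k l m * K m i j) - (\<Sum>m\<in>UNIV. Ga m l i * K k m j) - (\<Sum>m\<in>UNIV. Ga m l j * K k i m)
       = dK i k l j + (\<Sum>m\<in>UNIV. Ga k i m * K m l j) - (\<Sum>m\<in>UNIV. Ga m i l * K k m j) - (\<Sum>m\<in>UNIV. Ga m i j * K k l m)"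
      using condp[of l k i j] condp[of i k l j] Sli unfolding dK_def Ga_def KK by simp
    show ?thesis using alg_R[where hh="\<lambda>i j. h i j p" and Ga=Ga and K=K and dGa=dGa and dK=dK and eps=eps, OF _ gauss Qs] hGs unfolding Rr_def Ga_def by simp
  qed
  show ?thesis unfolding main Rh ..
qed

definition KA :: "('n::finite \<Rightarrow> 'n \<Rightarrow> 'n \<Rightarrow> real) \<Rightarrow> real^'n \<Rightarrow> real^'n \<Rightarrow> real^'n" where
  "KA Kc u v = (\<chi> k. \<Sum>i\<in>UNIV. \<Sum>j\<in>UNIV. Kc k i j * u$i * v$j)"
definition HA :: "('n::finite \<Rightarrow> 'n \<Rightarrow> real) \<Rightarrow> real^'n \<Rightarrow> real^'n \<Rightarrow> real" where
  "HA hc u v = (\<Sum>i\<in>UNIV. \<Sum>j\<in>UNIV. hc i j * u$i * v$j)"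
definition RA where
  "RA eps hc Kc u v w = eps *\<^sub>R (HA hc v w *\<^sub>R u - HA hc u w *\<^sub>R v) - KA Kc u (KA Kc v w) + KA Kc v (KA Kc u w)"
definition SA where
  "SA hc v w z = HA hc w z *\<^sub>R v + HA hc v w *\<^sub>R z + HA hc v z *\<^sub>R w"

lemma KA_add1: "KA Kc (x + y) z = KA Kc x z + KA Kc y z"
  by (simp add: KA_def vec_eq_iff algebra_simps sum.distrib)
lemma KA_add2: "KA Kc z (x + y) = KA Kc z x + KA Kc z y"
  by (simp add: KA_def vec_eq_iff algebra_simps sum.distrib)
lemma KA_scale1: "KA Kc (c *\<^sub>R x) z = c *\<^sub>R KA Kc x z"
  by (simp add: KA_def vec_eq_iff algebra_simps sum_distrib_left)
lemma KA_scale2: "KA Kc z (c *\<^sub>R x) = c *\<^sub>R KA Kc z x"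
  by (simp add: KA_def vec_eq_iff algebra_simps sum_distrib_left)
lemma HA_add1: "HA hc (x + y) z = HA hc x z + HA hc y z"
  by (simp add: HA_def algebra_simps sum.distrib)
lemma HA_add2: "HA hc z (x + y) = HA hc z x + HA hc z y"
  by (simp add: HA_def algebra_simps sum.distrib)
lemma HA_scale1: "HA hc (c *\<^sub>R x) z = c * HA hc x z"
  by (simp add: HA_def algebra_simps sum_distrib_left)
lemma HA_scale2: "HA hc z (c *\<^sub>R x) = c * HA hc z x"
  by (simp add: HA_def algebra_simps sum_distrib_left)

lemma KA_diff1: "KA Kc (x - y) z = KA Kc x z - KA Kc y z"
  using KA_add1[of Kc "x - y" y z] by simp
lemma KA_diff2: "KA Kc z (x - y) = KA Kc z x - KA Kc z y"
  using KA_add2[of Kc z "x - y" y] by simp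
lemma HA_diff1: "HA hc (x - y) z = HA hc x z - HA hc y z"
  using HA_add1[of hc "x - y" y z] by simp
lemma HA_diff2: "HA hc z (x - y) = HA hc z x - HA hc z y"
  using HA_add2[of hc z "x - y" y] by simp

lemmas LINR = KA_add1 KA_add2 KA_scale1 KA_scale2 HA_add1 HA_add2 HA_scale1 HA_scale2
  KA_diff1 KA_diff2 HA_diff1 HA_diff2 RA_def SA_def

lemma lin_zero:
  fixes f :: "real^'n::finite \<Rightarrow> 'v::real_vector"
  assumes "linear f" "\<And>a. f (axis a 1) = 0"
  shows "f u = 0"
proof -
  have "u = (\<Sum>a\<in>UNIV. u$a *\<^sub>R axis a 1)"
    using basis_expansion[of u] by (simp add: scalar_mult_eq_scaleR)
  then have "f u = (\<Sum>a\<in>UNIV. u$a *\<^sub>R f (axis a 1))"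
    by (metis (no_types, lifting) assms(1) linear_sum linear_scale sum.cong)
  then show ?thesis using assms(2) by simp
qed

definition DA where
  "DA eps hc Kc (sg :: real^'n::finite \<Rightarrow> real) u v w z = sg u *\<^sub>R SA hc v w z - sg v *\<^sub>R SA hc u w z
     - (RA eps hc Kc u v (KA Kc w z) - KA Kc (RA eps hc Kc u v w) z - KA Kc w (RA eps hc Kc u v z))"

lemma DA_lin:
  assumes sg: "linear sg"
  shows "linear (\<lambda>u. DA eps hc Kc sg u v w z)" "linear (\<lambda>v. DA eps hc Kc sg u v w z)"
    "linear (\<lambda>w. DA eps hc Kc sg u v w z)" "linear (\<lambda>z. DA eps hc Kc sg u v w z)"
  using linear_add[OF sg] linear_scale[OF sg]
  by (auto intro!: linearI simp: DA_def LINR algebra_simps)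

lemma axis_nth: "axis i (1::real) $ m = (if m = i then 1 else 0)"
  by (simp add: axis_def)
lemma sum_delta_r[simp]: "(\<Sum>m\<in>UNIV. f m * (if m = j then 1 else (0::real))) = f (j::'n::finite)"
proof -
  have "(\<Sum>m\<in>UNIV. f m * (if m = j then 1 else (0::real))) = (\<Sum>m\<in>UNIV. if m = j then f m else 0)"
    by (rule sum.cong) auto
  then show ?thesis by simp
qed
lemma axis_sum1[simp]: "(\<Sum>m\<in>UNIV. f m * axis i (1::real) $ m) = f i"
proof -
  have "(\<Sum>m\<in>UNIV. f m * axis i (1::real) $ m) = (\<Sum>m\<in>UNIV. if m = i then f m else 0)"
    by (rule sum.cong) (auto simp: axis_nth)
  then show ?thesis by simp
qed
lemma axis_sum3[simp]: "(\<Sum>m\<in>UNIV. f m * axis i (1::real) $ m * c) = f i * c"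
proof -
  have "(\<Sum>m\<in>UNIV. f m * axis i (1::real) $ m * c) = (\<Sum>m\<in>UNIV. if m = i then f m * c else 0)"
    by (rule sum.cong) (auto simp: axis_nth)
  then show ?thesis by simp
qed

lemma KA_axis2: "KA Kc y (axis j 1) = (\<chi> k. \<Sum>m\<in>UNIV. Kc k m j * y$m)"
  unfolding KA_def by simp
lemma KA_axis1: "KA Kc (axis i 1) y = (\<chi> k. \<Sum>m\<in>UNIV. Kc k i m * y$m)"
  unfolding KA_def by (subst sum.swap) simp
lemma HA_axis1: "HA hc (axis i 1) y = (\<Sum>m\<in>UNIV. hc i m * y$m)"
  unfolding HA_def by (subst sum.swap) simp
lemma HA_axis2: "HA hc y (axis j 1) = (\<Sum>m\<in>UNIV. hc m j * y$m)"
  unfolding HA_def by simp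

definition RC where
  "RC eps hc Kc = (\<lambda>l k i j. eps * (hc i j * (if k = l then 1 else 0) - hc l j * (if k = i then 1 else 0))
       - (\<Sum>m\<in>UNIV. Kc k l m * Kc m i j - Kc k i m * Kc m l j))"

lemma RA_axis: "RA eps hc Kc (axis a 1) (axis b 1) y = (\<chi> k. \<Sum>m\<in>UNIV. RC eps hc Kc a k b m * y$m)"
proof -
  have dsw: "(\<Sum>m\<in>UNIV. (\<Sum>l\<in>UNIV. Kc k c l * Kc l d m) * y$m) = (\<Sum>m\<in>UNIV. Kc k c m * (\<Sum>l\<in>UNIV. Kc m d l * y$l))"
    for k c d
  proof -
    have "(\<Sum>m\<in>UNIV. (\<Sum>l\<in>UNIV. Kc k c l * Kc l d m) * y$m) = (\<Sum>m\<in>UNIV. \<Sum>l\<in>UNIV. Kc k c l * (Kc l d m * y$m))"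
      by (simp add: sum_distrib_right mult.assoc)
    also have "\<dots> = (\<Sum>l\<in>UNIV. \<Sum>m\<in>UNIV. Kc k c l * (Kc l d m * y$m))" by (rule sum.swap)
    also have "\<dots> = (\<Sum>m\<in>UNIV. Kc k c m * (\<Sum>l\<in>UNIV. Kc m d l * y$l))" by (simp add: sum_distrib_left)
    finally show ?thesis .
  qed
  have e: "(\<Sum>m\<in>UNIV. RC eps hc Kc a k b m * y$m) =
     eps * ((\<Sum>m\<in>UNIV. hc b m * y$m) * (if k = a then 1 else 0) - (\<Sum>m\<in>UNIV. hc a m * y$m) * (if k = b then 1 else 0))
     - (\<Sum>m\<in>UNIV. (\<Sum>l\<in>UNIV. Kc k a l * Kc l b m) * y$m) + (\<Sum>m\<in>UNIV. (\<Sum>l\<in>UNIV. Kc k b l * Kc l a m) * y$m)" for k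
    unfolding RC_def
    by (simp add: sum_subtractf sum.distrib sum_distrib_left sum_distrib_right algebra_simps split del: if_split)
  show ?thesis
    unfolding vec_eq_iff
  proof
    fix k
    show "RA eps hc Kc (axis a 1) (axis b 1) y $ k = (\<chi> k. \<Sum>m\<in>UNIV. RC eps hc Kc a k b m * y$m) $ k"
      unfolding e vec_lambda_beta dsw RA_def
      by (simp add: KA_axis1 HA_axis1 axis_nth split del: if_split)
  qed
qed

lemma DA_axes:
  fixes Kc :: "'n::finite \<Rightarrow> 'n \<Rightarrow> 'n \<Rightarrow> real"
  assumes hs: "\<And>i j. hc i j = hc j i"
    and sga: "\<And>a. sg (axis a 1) = d a"
    and coord: "\<And>a b k i j. d a * (hc i j * (if k = b then 1 else 0) + hc i b * (if k = j then 1 else 0) + hc j b * (if k = i then 1 else 0))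
       - d b * (hc i j * (if k = a then 1 else 0) + hc i a * (if k = j then 1 else 0) + hc j a * (if k = i then 1 else 0))
     = (\<Sum>m\<in>UNIV. RC eps hc Kc a k b m * Kc m i j) - (\<Sum>m\<in>UNIV. RC eps hc Kc a m b i * Kc k m j) - (\<Sum>m\<in>UNIV. RC eps hc Kc a m b j * Kc k i m)"
  shows "DA eps hc Kc sg (axis a 1) (axis b 1) (axis i 1) (axis j 1) = 0"
proof -
  have K2: "KA Kc (axis i 1) (axis j 1) = (\<chi> k. Kc k i j)" by (simp add: KA_axis1)
  have SA: "SA hc (axis b 1) (axis i 1) (axis j 1) = (\<chi> k. hc i j * (if k = b then 1 else 0) + hc i b * (if k = j then 1 else 0) + hc j b * (if k = i then 1 else 0))"
    for b i j unfolding SA_def vec_eq_iff by (auto simp: HA_axis1 axis_nth hs)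
  have RAi: "RA eps hc Kc (axis a 1) (axis b 1) (axis c 1) = (\<chi> m. RC eps hc Kc a m b c)" for c
    by (simp add: RA_axis)
  have T1: "RA eps hc Kc (axis a 1) (axis b 1) (KA Kc (axis i 1) (axis j 1)) = (\<chi> k. \<Sum>m\<in>UNIV. RC eps hc Kc a k b m * Kc m i j)"
    by (simp add: K2 RA_axis)
  have T2: "KA Kc (RA eps hc Kc (axis a 1) (axis b 1) (axis i 1)) (axis j 1) = (\<chi> k. \<Sum>m\<in>UNIV. RC eps hc Kc a m b i * Kc k m j)"
    by (simp add: RAi KA_axis2 mult.commute)
  have T3: "KA Kc (axis i 1) (RA eps hc Kc (axis a 1) (axis b 1) (axis j 1)) = (\<chi> k. \<Sum>m\<in>UNIV. RC eps hc Kc a m b j * Kc k i m)"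
    by (simp add: RAi KA_axis1 mult.commute)
  show ?thesis
    unfolding DA_def T1 T2 T3 SA sga vec_eq_iff
  proof
    fix k
    show "(d a *\<^sub>R (\<chi> k. hc i j * (if k = b then 1 else 0) + hc i b * (if k = j then 1 else 0) + hc j b * (if k = i then 1 else 0)) -
          d b *\<^sub>R (\<chi> k. hc i j * (if k = a then 1 else 0) + hc i a * (if k = j then 1 else 0) + hc j a * (if k = i then 1 else 0)) -
          ((\<chi> k. \<Sum>m\<in>UNIV. RC eps hc Kc a k b m * Kc m i j) - (\<chi> k. \<Sum>m\<in>UNIV. RC eps hc Kc a m b i * Kc k m j) -
           (\<chi> k. \<Sum>m\<in>UNIV. RC eps hc Kc a m b j * Kc k i m))) $ k = 0 $ k"
      using coord[of a i j k b] by (simp split del: if_split)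
  qed
qed

lemma DA_zero:
  fixes Kc :: "'n::finite \<Rightarrow> 'n \<Rightarrow> 'n \<Rightarrow> real"
  assumes sg: "linear sg" and ax: "\<And>a b i j. DA eps hc Kc sg (axis a 1) (axis b 1) (axis i 1) (axis j 1) = 0"
  shows "DA eps hc Kc sg u v w z = 0"
proof -
  have h1: "DA eps hc Kc sg (axis a 1) (axis b 1) (axis i 1) z = 0" for a b i
    by (rule lin_zero[OF DA_lin(4)[OF sg]]) (simp add: ax)
  have h2: "DA eps hc Kc sg (axis a 1) (axis b 1) w z = 0" for a b
    by (rule lin_zero[OF DA_lin(3)[OF sg]]) (simp add: h1)
  have h3: "DA eps hc Kc sg (axis a 1) v w z = 0" for a
    by (rule lin_zero[OF DA_lin(2)[OF sg]]) (simp add: h2)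
  show ?thesis
    by (rule lin_zero[OF DA_lin(1)[OF sg]]) (simp add: h3)
qed

lemma HA_sum1: "finite A \<Longrightarrow> HA hc (\<Sum>x\<in>A. f x) w = (\<Sum>x\<in>A. HA hc (f x) w)"
  by (induction A rule: finite_induct) (simp add: HA_def, simp add: HA_add1)
lemma HA_sum2: "finite A \<Longrightarrow> HA hc w (\<Sum>x\<in>A. f x) = (\<Sum>x\<in>A. HA hc w (f x))"
  by (induction A rule: finite_induct) (simp add: HA_def, simp add: HA_add2)

lemma KA_sym: assumes "\<And>k i j. Kc k i j = Kc k j i" shows "KA Kc u v = KA Kc v u"
proof -
  have "\<And>k. (\<Sum>i\<in>UNIV. \<Sum>j\<in>UNIV. Kc k i j * u$i * v$j) = (\<Sum>i\<in>UNIV. \<Sum>j\<in>UNIV. Kc k i j * v$i * u$j)"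
    by (subst sum.swap) (simp add: assms mult_ac)
  then show ?thesis unfolding KA_def vec_eq_iff by simp
qed

lemma HA_sym: assumes "\<And>i j. hc i j = hc j i" shows "HA hc u v = HA hc v u"
  unfolding HA_def by (subst sum.swap) (simp add: assms mult_ac)

lemma RA_scale3: "RA eps hc Kc u v (c *\<^sub>R w) = c *\<^sub>R RA eps hc Kc u v w"
  by (simp add: RA_def LINR algebra_simps)

lemma C_sym:
  fixes Kc :: "'n::finite \<Rightarrow> 'n \<Rightarrow> 'n \<Rightarrow> real"
  assumes Ks: "\<And>k i j. Kc k i j = Kc k j i" and hs: "\<And>i j. hc i j = hc j i"
    and Cc: "\<And>l i j. (\<Sum>m\<in>UNIV. Kc m i j * hc l m) = (\<Sum>m\<in>UNIV. Kc m l j * hc i m)"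
  shows "HA hc (KA Kc u v) w = HA hc (KA Kc u w) v"
proof -
  define F where "F u v w = HA hc (KA Kc u v) w - HA hc (KA Kc u w) v" for u v w
  have l1: "linear (\<lambda>u. F u v w)" for v w by (rule linearI) (simp_all add: F_def LINR algebra_simps)
  have l2: "linear (\<lambda>v. F u v w)" for u w by (rule linearI) (simp_all add: F_def LINR algebra_simps)
  have l3: "linear (\<lambda>w. F u v w)" for u v by (rule linearI) (simp_all add: F_def LINR algebra_simps)
  have ax: "F (axis a 1) (axis b 1) (axis c 1) = 0" for a b c
  proof -
    have e: "HA hc (KA Kc (axis a 1) (axis b 1)) (axis c 1) = (\<Sum>m\<in>UNIV. Kc m a b * hc c m)" for a b c
      by (simp add: KA_axis1 HA_axis2 hs mult.commute)
    have "(\<Sum>m\<in>UNIV. Kc m a b * hc c m) = (\<Sum>m\<in>UNIV. Kc m b a * hc c m)" by (simp add: Ks)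
    also have "\<dots> = (\<Sum>m\<in>UNIV. Kc m c a * hc b m)" by (rule Cc)
    also have "\<dots> = (\<Sum>m\<in>UNIV. Kc m a c * hc b m)" by (simp add: Ks)
    finally show ?thesis unfolding F_def e by simp
  qed
  have "F (axis a 1) (axis b 1) w = 0" for a b by (rule lin_zero[OF l3]) (simp add: ax)
  then have "F (axis a 1) v w = 0" for a by (rule lin_zero[OF l2])
  then have "F u v w = 0" by (rule lin_zero[OF l1])
  then show ?thesis unfolding F_def by simp
qed

lemma orth_comb:
  fixes e :: "nat \<Rightarrow> real^'n::finite"
  assumes orth: "\<forall>i\<in>I. \<forall>j\<in>I. HA hc (e i) (e j) = (if i = j then 1 else 0)" and fin: "finite I" and j: "j \<in> I"
  shows "HA hc (\<Sum>i\<in>I. c i *\<^sub>R e i) (e j) = c j"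
proof -
  have "HA hc (\<Sum>i\<in>I. c i *\<^sub>R e i) (e j) = (\<Sum>i\<in>I. c i * HA hc (e i) (e j))"
    by (simp add: HA_sum1[OF fin] HA_scale1)
  also have "\<dots> = (\<Sum>i\<in>I. if i = j then c i else 0)"
    by (rule sum.cong) (use orth j in auto)
  also have "\<dots> = c j" using fin j by simp
  finally show ?thesis .
qed

lemma expansion:
  fixes e :: "nat \<Rightarrow> real^'n::finite"
  assumes orth: "\<forall>i\<in>{1..CARD('n)}. \<forall>j\<in>{1..CARD('n)}. HA hc (e i) (e j) = (if i = j then 1 else 0)"
  shows "y = (\<Sum>i\<in>{1..CARD('n)}. HA hc y (e i) *\<^sub>R e i)"
proof -
  define I where "I = {1..CARD('n)}"
  have fin: "finite I" unfolding I_def by simp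
  have inj: "inj_on e I"
  proof (rule inj_onI)
    fix i j assume ij: "i \<in> I" "j \<in> I" "e i = e j"
    have a: "HA hc (e i) (e j) = (if i = j then 1 else 0)" using orth ij(1,2) unfolding I_def by blast
    have "HA hc (e i) (e i) = 1" using orth ij(1) unfolding I_def by auto
    then have b: "HA hc (e i) (e j) = 1" using ij(3) by simp
    show "i = j" using a b by (simp split: if_splits)
  qed
  define B where "B = e ` I"
  have finB: "finite B" unfolding B_def using fin by simp
  have cardB: "card B = CARD('n)" unfolding B_def I_def using card_image[OF inj] by (simp add: I_def)
  have reix: "(\<Sum>v\<in>B. c v *\<^sub>R v) = (\<Sum>i\<in>I. c (e i) *\<^sub>R e i)" for c
    unfolding B_def by (simp add: sum.reindex[OF inj])
  have ind: "independent B"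
    unfolding eucl.independent_explicit
  proof (intro conjI finB allI impI ballI)
    fix c v assume z: "(\<Sum>v\<in>B. c v *\<^sub>R v) = 0" and v: "v \<in> B"
    then obtain j where j: "j \<in> I" "v = e j" unfolding B_def by auto
    have "HA hc (\<Sum>i\<in>I. c (e i) *\<^sub>R e i) (e j) = c (e j)"
      by (rule orth_comb) (use orth fin j in \<open>auto simp: I_def\<close>)
    moreover have "HA hc (\<Sum>i\<in>I. c (e i) *\<^sub>R e i) (e j) = 0" using z unfolding reix by (simp add: HA_def)
    ultimately show "c v = 0" using j by simp
  qed
  have "UNIV \<subseteq> span B"
    using eucl.card_eq_dim[of B UNIV] ind cardB finB by simp
  then have "y \<in> span B" by auto
  then obtain c where c: "y = (\<Sum>v\<in>B. c v *\<^sub>R v)" using real_vector.span_finite[OF finB] by auto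
  then have y: "y = (\<Sum>i\<in>I. c (e i) *\<^sub>R e i)" using reix by simp
  have "HA hc y (e j) = c (e j)" if "j \<in> I" for j
    unfolding y by (rule orth_comb) (use orth fin that in \<open>auto simp: I_def\<close>)
  then have "(\<Sum>i\<in>I. HA hc y (e i) *\<^sub>R e i) = (\<Sum>i\<in>I. c (e i) *\<^sub>R e i)" by simp
  then show ?thesis using y unfolding I_def by simp
qed

declare One_nat_def[simp del]

lemma vec_num_mult1: "(numeral n :: real^'n::finite) * x = numeral n *\<^sub>R x"
  by (simp add: vec_eq_iff)
lemma vec_num_mult2: "x * (numeral n :: real^'n::finite) = numeral n *\<^sub>R x"
  by (simp add: vec_eq_iff)

locale fin_setup =
  fixes hc :: "'n::finite \<Rightarrow> 'n \<Rightarrow> real" and Kc :: "'n \<Rightarrow> 'n \<Rightarrow> 'n \<Rightarrow> real"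
    and sg :: "real^'n \<Rightarrow> real" and eps :: real and e :: "nat \<Rightarrow> real^'n" and lam :: "nat \<Rightarrow> real"
  assumes hs: "\<And>i j. hc i j = hc j i"
    and Ks: "\<And>k i j. Kc k i j = Kc k j i"
    and Cc: "\<And>l i j. (\<Sum>m\<in>UNIV. Kc m i j * hc l m) = (\<Sum>m\<in>UNIV. Kc m l j * hc i m)"
    and DAz: "\<And>u v w z. DA eps hc Kc sg u v w z = 0"
    and sg: "linear sg"
    and orth: "\<forall>i\<in>{1..CARD('n)}. \<forall>j\<in>{1..CARD('n)}. HA hc (e i) (e j) = (if i = j then 1 else 0)"
    and eigen: "\<forall>i\<in>{1..CARD('n)}. KA Kc (e 1) (e i) = lam i *\<^sub>R e i"
    and two: "2 \<le> CARD('n)"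
begin

lemma HAs: "HA hc u v = HA hc v u" by (rule HA_sym[OF hs])
lemma KAs: "KA Kc u v = KA Kc v u" by (rule KA_sym[OF Ks])
lemma CS: "HA hc (KA Kc u v) w = HA hc (KA Kc u w) v" by (rule C_sym[OF Ks hs Cc])

lemma o: "i \<in> {1..CARD('n)} \<Longrightarrow> j \<in> {1..CARD('n)} \<Longrightarrow> HA hc (e i) (e j) = (if i = j then 1 else 0)"
  using orth by blast
lemma one_I: "1 \<in> {1..CARD('n)}" using two by auto

lemma eig: "i \<in> {1..CARD('n)} \<Longrightarrow> KA Kc (e 1) (e i) = lam i *\<^sub>R e i" using eigen by blast
lemma eig': "i \<in> {1..CARD('n)} \<Longrightarrow> KA Kc (e i) (e 1) = lam i *\<^sub>R e i" using eig KAs by metis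

lemma selfadj: "b \<in> {1..CARD('n)} \<Longrightarrow> HA hc (KA Kc (e 1) y) (e b) = lam b * HA hc y (e b)"
  using CS[of "e 1" y "e b"] eig[of b] by (simp add: HA_scale1 HA_scale2 HAs)

lemma S1:
  assumes b: "b \<in> {2..CARD('n)}"
  shows "sg (e b) = 0 \<and> sg (e 1) = (lam 1 - 2 * lam b) * (lam 1 * lam b - lam b * lam b - eps)"
proof -
  have bI: "b \<in> {1..CARD('n)}" and b1: "b \<noteq> 1" using b by auto
  have o11: "HA hc (e 1) (e 1) = 1" using o[OF one_I one_I] by simp
  have obb: "HA hc (e b) (e b) = 1" using o[OF bI bI] by simp
  have o1b: "HA hc (e 1) (e b) = 0" using o[OF one_I bI] b1 by simp
  have ob1: "HA hc (e b) (e 1) = 0" using o[OF bI one_I] b1 by simp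
  define c where "c = lam 1 * lam b - lam b * lam b - eps"
  have r: "RA eps hc Kc (e 1) (e b) (e 1) = c *\<^sub>R e b"
    unfolding RA_def c_def
    by (simp add: ob1 o11 eig'[OF bI] eig[OF bI] eig[OF one_I] KA_scale1 KA_scale2 algebra_simps)
  note simps = r o11 ob1 o1b obb RA_scale3 eig[OF one_I] eig[OF bI] eig'[OF bI] KA_scale1 KA_scale2
     HA_add1 HA_diff1 HA_scale1 DA_def SA_def vec_num_mult1 vec_num_mult2
  have "HA hc (DA eps hc Kc sg (e 1) (e b) (e 1) (e 1)) (e 1) = 0" by (simp add: DAz HA_def)
  then have A: "sg (e b) = 0" by (simp add: simps)
  have "HA hc (DA eps hc Kc sg (e 1) (e b) (e 1) (e 1)) (e b) = 0" by (simp add: DAz HA_def)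
  then have B: "sg (e 1) = lam 1 * c - 2 * c * lam b" by (simp add: simps algebra_simps)
  show ?thesis using A B unfolding c_def by (simp add: algebra_simps)
qed

lemma S2:
  assumes f: "f \<in> {2..CARD('n)}" and b: "b \<in> {2..CARD('n)}"
  shows "(lam 1 - 2 * lam b) * (lam f - lam b) * HA hc (KA Kc (e f) (e b)) (e b) = 0"
proof -
  have bI: "b \<in> {1..CARD('n)}" and b1: "b \<noteq> 1" using b by auto
  have fI: "f \<in> {1..CARD('n)}" and f1: "f \<noteq> 1" using f by auto
  have ob1: "HA hc (e b) (e 1) = 0" using o[OF bI one_I] b1 by simp
  have of1: "HA hc (e f) (e 1) = 0" using o[OF fI one_I] f1 by simp
  have sgf: "sg (e f) = 0" and sgb: "sg (e b) = 0" using S1[OF f] S1[OF b] by auto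
  have kbf: "KA Kc (e b) (e f) = KA Kc (e f) (e b)" by (rule KAs)
  have r: "RA eps hc Kc (e f) (e b) (e 1) = (lam f - lam b) *\<^sub>R KA Kc (e f) (e b)"
    unfolding RA_def
    by (simp add: ob1 of1 eig'[OF bI] eig'[OF fI] kbf KA_scale1 KA_scale2 algebra_simps)
  have ky1: "KA Kc (KA Kc (e f) (e b)) (e 1) = KA Kc (e 1) (KA Kc (e f) (e b))" by (rule KAs)
  have "HA hc (DA eps hc Kc sg (e f) (e b) (e 1) (e 1)) (e b) = 0" by (simp add: DAz HA_def)
  then show ?thesis
    by (simp add: sgf sgb r RA_scale3 eig[OF one_I] KA_scale1 KA_scale2 KA_diff1 KA_diff2 ky1 selfadj[OF bI]
        HA_add1 HA_diff1 HA_scale1 DA_def SA_def vec_num_mult1 vec_num_mult2 algebra_simps)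
qed

lemma S4:
  assumes nz: "\<exists>v. sg v \<noteq> 0"
  shows "sg (e 1) \<noteq> 0"
proof
  assume z: "sg (e 1) = 0"
  obtain v where v: "sg v \<noteq> 0" using nz by blast
  have "v = (\<Sum>i\<in>{1..CARD('n)}. HA hc v (e i) *\<^sub>R e i)" by (rule expansion[OF orth])
  then have "sg v = sg (\<Sum>i\<in>{1..CARD('n)}. HA hc v (e i) *\<^sub>R e i)" by simp
  also have "\<dots> = (\<Sum>i\<in>{1..CARD('n)}. sg (HA hc v (e i) *\<^sub>R e i))" by (rule linear_sum[OF sg])
  also have "\<dots> = (\<Sum>i\<in>{1..CARD('n)}. HA hc v (e i) * sg (e i))" by (simp add: linear_scale[OF sg])
  also have "\<dots> = 0"
  proof (rule sum.neutral, rule ballI)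
    fix i assume i: "i \<in> {1..CARD('n)}"
    show "HA hc v (e i) * sg (e i) = 0"
    proof (cases "i = 1")
      case True then show ?thesis using z by simp
    next
      case False then have "i \<in> {2..CARD('n)}" using i by auto
      then show ?thesis using S1 by simp
    qed
  qed
  finally show False using v by simp
qed

lemma S3:
  assumes b: "b \<in> {2..CARD('n)}" and ne: "lam 1 \<noteq> 2 * lam b"
  shows "sg (e 1) = - (eps * lam b + (lam b - lam 1) * lam b * lam b)"
proof -
  have bI: "b \<in> {1..CARD('n)}" and b1: "b \<noteq> 1" using b by auto
  have obb: "HA hc (e b) (e b) = 1" using o[OF bI bI] by simp
  have o1b: "HA hc (e 1) (e b) = 0" using o[OF one_I bI] b1 by simp
  have ob1: "HA hc (e b) (e 1) = 0" using o[OF bI one_I] b1 by simp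
  have sgb: "sg (e b) = 0" using S1[OF b] by auto
  define w where "w = KA Kc (e b) (e b)"
  have hw1: "HA hc w (e 1) = lam b"
    unfolding w_def using CS[of "e b" "e b" "e 1"] eig'[OF bI] by (simp add: HA_scale1 obb)
  have h1w: "HA hc (e 1) w = lam b" using hw1 HAs by metis
  have r3: "RA eps hc Kc (e 1) (e b) (e b) = eps *\<^sub>R e 1 - KA Kc (e 1) w + lam b *\<^sub>R w"
    unfolding RA_def w_def by (simp add: obb o1b eig[OF bI] KA_scale2)
  have k3: "HA hc (KA Kc X (e b)) (e b) = HA hc w X" for X
    unfolding w_def using CS[of "e b" X "e b"] KAs[of X "e b"] by simp
  have k3': "HA hc (KA Kc (e b) X) (e b) = HA hc w X" for X
    unfolding w_def using CS[of "e b" X "e b"] by simp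
  have k1: "HA hc (KA Kc (e 1) (KA Kc (e b) w)) (e b) = lam b * HA hc w w"
    using selfadj[OF bI, of "KA Kc (e b) w"] k3'[of w] by simp
  have rw: "HA hc (RA eps hc Kc (e 1) (e b) w) (e b) = - eps * lam b - lam b * HA hc w w + HA hc w (KA Kc (e 1) w)"
    unfolding RA_def by (simp add: HA_add1 HA_diff1 HA_scale1 obb o1b h1w k1 k3' algebra_simps)
  have rwr: "HA hc w (RA eps hc Kc (e 1) (e b) (e b)) = eps * lam b - HA hc w (KA Kc (e 1) w) + lam b * HA hc w w"
    unfolding r3 by (simp add: HA_add2 HA_diff2 HA_scale2 hw1)
  have sbbb: "HA hc (SA hc (e b) (e b) (e b)) (e b) = 3"
    unfolding SA_def by (simp add: HA_add1 HA_scale1 obb vec_num_mult1 vec_num_mult2)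
  have "HA hc (DA eps hc Kc sg (e 1) (e b) (e b) (e b)) (e b) = 0" by (simp add: DAz HA_def)
  then have M: "3 * sg (e 1) = - eps * lam b - lam b * HA hc w w + HA hc w (KA Kc (e 1) w)
      - 2 * (eps * lam b - HA hc w (KA Kc (e 1) w) + lam b * HA hc w w)"
    unfolding DA_def w_def[symmetric]
    by (simp add: HA_diff1 HA_scale1 sgb sbbb rw k3 k3' rwr)
  define I where "I = {1..CARD('n)}"
  have exw: "w = (\<Sum>f\<in>I. HA hc w (e f) *\<^sub>R e f)" unfolding I_def by (rule expansion[OF orth])
  have exk: "KA Kc (e 1) w = (\<Sum>f\<in>I. HA hc (KA Kc (e 1) w) (e f) *\<^sub>R e f)" unfolding I_def by (rule expansion[OF orth])
  have finI: "finite I" unfolding I_def by simp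
  have Q1: "HA hc w w = (\<Sum>f\<in>I. HA hc w (e f) * HA hc w (e f))"
  proof -
    have "HA hc w w = HA hc w (\<Sum>f\<in>I. HA hc w (e f) *\<^sub>R e f)" using exw by (rule arg_cong)
    also have "\<dots> = (\<Sum>f\<in>I. HA hc w (e f) * HA hc w (e f))" by (simp add: HA_sum2[OF finI] HA_scale2)
    finally show ?thesis .
  qed
  have Q2: "HA hc w (KA Kc (e 1) w) = (\<Sum>f\<in>I. lam f * HA hc w (e f) * HA hc w (e f))"
  proof -
    have "HA hc w (KA Kc (e 1) w) = HA hc w (\<Sum>f\<in>I. HA hc (KA Kc (e 1) w) (e f) *\<^sub>R e f)" using exk by (rule arg_cong)
    also have "\<dots> = (\<Sum>f\<in>I. HA hc (KA Kc (e 1) w) (e f) * HA hc w (e f))" by (simp add: HA_sum2[OF finI] HA_scale2)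
    also have "\<dots> = (\<Sum>f\<in>I. lam f * HA hc w (e f) * HA hc w (e f))"
      by (rule sum.cong) (auto simp: selfadj I_def)
    finally show ?thesis .
  qed
  have term0: "(lam b - lam f) * HA hc w (e f) * HA hc w (e f) = 0" if f: "f \<in> {2..CARD('n)}" for f
  proof -
    have "HA hc w (e f) = HA hc (KA Kc (e f) (e b)) (e b)"
      unfolding w_def using CS[of "e b" "e b" "e f"] KAs[of "e b" "e f"] by simp
    moreover have "(lam 1 - 2 * lam b) * ((lam f - lam b) * HA hc (KA Kc (e f) (e b)) (e b)) = 0"
      using S2[OF f b] by (simp add: mult.assoc)
    ultimately have "(lam f - lam b) * HA hc w (e f) = 0" using ne by simp
    then show ?thesis by (metis mult_zero_left mult_zero_right mult.assoc minus_diff_eq mult_minus_left neg_equal_0_iff_equal)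
  qed
  have Isplit: "I = insert 1 {2..CARD('n)}" unfolding I_def using two by auto
  have "lam b * HA hc w w - HA hc w (KA Kc (e 1) w) = (\<Sum>f\<in>I. (lam b - lam f) * HA hc w (e f) * HA hc w (e f))"
    unfolding Q1 Q2 by (simp add: sum_distrib_left sum_subtractf algebra_simps)
  also have "\<dots> = (lam b - lam 1) * HA hc w (e 1) * HA hc w (e 1)"
  proof -
    have z: "(\<Sum>f\<in>{2..CARD('n)}. (lam b - lam f) * HA hc w (e f) * HA hc w (e f)) = 0"
      by (rule sum.neutral) (blast intro: term0)
    show ?thesis unfolding Isplit by (simp add: z)
  qed
  finally have Q: "lam b * HA hc w w - HA hc w (KA Kc (e 1) w) = (lam b - lam 1) * lam b * lam b"
    using hw1 by simp
  show ?thesis using M Q by (simp add: algebra_simps)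
qed

lemma final:
  assumes nz: "\<exists>v. sg v \<noteq> 0"
    and bnd: "\<forall>i\<in>{2..CARD('n)}. 2 * lam i \<le> lam 1"
    and N: "2 \<le> N" "N \<le> CARD('n)" and lt: "lam 2 < lam N"
  shows False
proof -
  have s: "sg (e 1) \<noteq> 0" by (rule S4[OF nz])
  have key: "lam 1 = 3 * lam b" if b: "b \<in> {2..CARD('n)}" and ne: "lam 1 \<noteq> 2 * lam b" for b
  proof -
    define t where "t = lam b"
    define q where "q = lam 1 * t - t * t - eps"
    have e1: "sg (e 1) = (lam 1 - 2 * t) * q" using S1[OF b] unfolding t_def q_def by simp
    have e2: "sg (e 1) = - (eps * t + (t - lam 1) * t * t)" using S3[OF b ne] unfolding t_def by simp
    have "(lam 1 - 3 * t) * q = (lam 1 - 2 * t) * q + (eps * t + (t - lam 1) * t * t)"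
      unfolding q_def by (simp add: algebra_simps)
    also have "\<dots> = 0" using e1 e2 by simp
    finally have "(lam 1 - 3 * t) * q = 0" .
    moreover have "q \<noteq> 0" using e1 s by auto
    ultimately show ?thesis unfolding t_def by simp
  qed
  have b2: "2 \<in> {2..CARD('n)}" using two by simp
  have bN: "N \<in> {2..CARD('n)}" using N by simp
  have "2 * lam N \<le> lam 1" using bnd bN by blast
  then have "lam 1 \<noteq> 2 * lam 2" using lt by simp
  then have l2: "lam 1 = 3 * lam 2" using key[OF b2] by simp
  show False
  proof (cases "lam 1 = 2 * lam N")
    case True
    then have "sg (e 1) = 0" using S1[OF bN] by simp
    then show False using s by simp
  next
    case False
    then have "lam 1 = 3 * lam N" using key[OF bN] by simp
    then show False using l2 lt by simp
  qed
qed

end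

theorem lemma4p3:
  fixes U :: "(real^'n::finite) set"
    and x :: "real^'n \<Rightarrow> real^'m::finite"
    and eps :: real
    and G hG :: "'n \<Rightarrow> 'n \<Rightarrow> 'n \<Rightarrow> real^'n \<Rightarrow> real"
    and h :: "'n \<Rightarrow> 'n \<Rightarrow> real^'n \<Rightarrow> real"
    and mu :: "real^'n \<Rightarrow> real"
    and p :: "real^'n"
    and e :: "nat \<Rightarrow> real^'n"
    and lam :: "nat \<Rightarrow> real"
  assumes hyp: "centroaffine_hypersurface U x eps G h"
    and convex: "positive_definite_on U h"
    and smooth_h: "\<forall>i j. smooth_on U (h i j)"
    and smooth_G: "\<forall>k i j. smooth_on U (G k i j)"
    and smooth_hG: "\<forall>k i j. smooth_on U (hG k i j)"
    and LC: "levi_civita U h hG"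
    and smooth_mu: "smooth_on U mu"
    and nonconst: "\<not> (\<exists>c. \<forall>q\<in>U. mu q = c)"
    and cond: "\<forall>q\<in>U. \<forall>l k i j.
        cov_deriv_K hG (diff_tensor G hG) l k i j q =
          mu q * (h i j q * (if k = l then 1 else 0) + h i l q * (if k = j then 1 else 0)
                  + h j l q * (if k = i then 1 else 0))"
    and pU: "p \<in> U"
    and dmu: "frechet_derivative mu (at p) \<noteq> (\<lambda>v. 0)"
    and orthonormal: "\<forall>i\<in>{1..CARD('n)}. \<forall>j\<in>{1..CARD('n)}.
        metric_at h p (e i) (e j) = (if i = j then 1 else 0)"
    and maximal: "\<forall>u. metric_at h p u u = 1 \<longrightarrow>
        metric_at h p (K_at (diff_tensor G hG) p u u) u
        \<le> metric_at h p (K_at (diff_tensor G hG) p (e 1) (e 1)) (e 1)"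
    and eigen: "\<forall>i\<in>{1..CARD('n)}. K_at (diff_tensor G hG) p (e 1) (e i) = lam i *\<^sub>R e i"
    and bound: "\<forall>i\<in>{2..CARD('n)}. lam 1 \<ge> 2 * lam i \<and>
        (lam 1 = 2 * lam i \<longrightarrow> metric_at h p (K_at (diff_tensor G hG) p (e i) (e i)) (e i) = 0)"
    and ordered: "\<forall>i j. 2 \<le> i \<and> i \<le> j \<and> j \<le> CARD('n) \<longrightarrow> lam i \<le> lam j"
  shows "\<not> (\<exists>m::nat. 2 \<le> m \<and> m \<le> CARD('n) - 1 \<and>
            (\<forall>i\<in>{2..m}. lam i = lam 2) \<and> lam m < lam (m + 1) \<and>
            (\<forall>i\<in>{m+1..CARD('n)}. lam i = lam (CARD('n))))"
  proof
  assume "\<exists>m::nat. 2 \<le> m \<and> m \<le> CARD('n) - 1 \<and>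
            (\<forall>i\<in>{2..m}. lam i = lam 2) \<and> lam m < lam (m + 1) \<and>
            (\<forall>i\<in>{m+1..CARD('n)}. lam i = lam (CARD('n)))"
  then obtain m :: nat where m: "2 \<le> m" "m \<le> CARD('n) - 1" "\<forall>i\<in>{2..m}. lam i = lam 2"
    "lam m < lam (m + 1)" "\<forall>i\<in>{m+1..CARD('n)}. lam i = lam (CARD('n))" by blast
  have two: "2 \<le> CARD('n)" using m(1,2) by linarith
  have "m \<in> {2..m}" using m(1) by simp
  then have l2m: "lam m = lam 2" using m(3) by blast
  have "m + 1 \<in> {m+1..CARD('n)}" using m(1,2) by simp
  then have lmn: "lam (m + 1) = lam (CARD('n))" using m(5) by blast
  have lt: "lam 2 < lam (CARD('n))" using m(4) l2m lmn by simp
  define hc where "hc = (\<lambda>i j. h i j p)"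
  define Kc where "Kc = (\<lambda>k i j. diff_tensor G hG k i j p)"
  define sg where "sg = frechet_derivative mu (at p)"
  have U: "open U" using hyp unfolding centroaffine_hypersurface_def by auto
  have hs: "\<And>i j. hc i j = hc j i" using sym_coeffs[OF hyp pU] unfolding hc_def by blast
  have hGs: "\<And>k i j. hG k i j p = hG k j i p" using LC pU unfolding levi_civita_def by auto
  have Gs: "\<And>k i j. G k i j p = G k j i p" using sym_coeffs[OF hyp pU] by blast
  have Ks: "\<And>k i j. Kc k i j = Kc k j i" unfolding Kc_def diff_tensor_def using hGs Gs by simp
  have LCp: "\<And>k i j. pd k (h i j) p = (\<Sum>l\<in>UNIV. hG l k i p * h l j p + hG l k j p * h i l p)"
    using LC pU unfolding levi_civita_def by auto
  have Cc: "\<And>l i j. (\<Sum>m\<in>UNIV. Kc m i j * hc l m) = (\<Sum>m\<in>UNIV. Kc m l j * hc i m)"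
  proof -
    fix l i j
    show "(\<Sum>m\<in>UNIV. Kc m i j * hc l m) = (\<Sum>m\<in>UNIV. Kc m l j * hc i m)"
      unfolding Kc_def hc_def
      by (rule alg_C[where Gm="\<lambda>k i j. G k i j p" and Ga="\<lambda>k i j. hG k i j p" and dh="\<lambda>k i j. pd k (h i j) p"])
         (simp add: diff_tensor_def, rule hGs, rule LCp, rule gauss_codazzi(1)[OF hyp pU smooth_h smooth_G])
  qed
  have dmup: "mu differentiable (at p)" using smooth_diff_at[OF smooth_mu U pU] .
  have lin: "linear sg" unfolding sg_def by (rule linear_frechet_derivative[OF dmup])
  have sga: "\<And>a. sg (axis a 1) = pd a mu p" unfolding sg_def pd_def by simp
  have coord: "\<And>a b k i j. pd a mu p * (hc i j * (if k = b then 1 else 0) + hc i b * (if k = j then 1 else 0) + hc j b * (if k = i then 1 else 0))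
       - pd b mu p * (hc i j * (if k = a then 1 else 0) + hc i a * (if k = j then 1 else 0) + hc j a * (if k = i then 1 else 0))
     = (\<Sum>m\<in>UNIV. RC eps hc Kc a k b m * Kc m i j) - (\<Sum>m\<in>UNIV. RC eps hc Kc a m b i * Kc k m j) - (\<Sum>m\<in>UNIV. RC eps hc Kc a m b j * Kc k i m)"
    unfolding RC_def hc_def Kc_def
    using coordE[OF hyp smooth_h smooth_G smooth_hG LC smooth_mu cond pU] by simp
  have DAz: "\<And>u v w z. DA eps hc Kc sg u v w z = 0"
    by (rule DA_zero[OF lin]) (rule DA_axes[OF hs sga coord])
  have orth': "\<forall>i\<in>{1..CARD('n)}. \<forall>j\<in>{1..CARD('n)}. HA hc (e i) (e j) = (if i = j then 1 else 0)"
    using orthonormal unfolding metric_at_def HA_def hc_def .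
  have eig': "\<forall>i\<in>{1..CARD('n)}. KA Kc (e 1) (e i) = lam i *\<^sub>R e i"
    using eigen unfolding K_at_def KA_def Kc_def .
  interpret fs: fin_setup hc Kc sg eps e lam
    by (rule fin_setup.intro) (fact hs Ks Cc DAz lin orth' eig' two)+
  have nz: "\<exists>v. sg v \<noteq> 0"
  proof (rule ccontr)
    assume "\<not> (\<exists>v. sg v \<noteq> 0)"
    then have "sg = (\<lambda>v. 0)" by auto
    then show False using dmu unfolding sg_def by simp
  qed
  have bnd: "\<forall>i\<in>{2..CARD('n)}. 2 * lam i \<le> lam 1" using bound by auto
  show False
    by (rule fs.final[OF nz bnd two order_refl lt])
qed

end
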